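(* Let $\Psi$ be a well-formed declarative context and $A,B$ declarative types. If $\Psi\vdash A\le B$, then there is a context $\Delta$ such that $\Psi\vdash A<:B\dashv\Delta$.
   Context: Declarative types $A ::= 1\mid\alpha\mid\forall\alpha.A\mid A\to B$; declarative contexts $\Psi ::= \cdot\mid\Psi,\alpha\mid\Psi,x:A$. Declarative subtyping $\Psi\vdash A\le B$: least relation with $\alpha\in\Psi\Rightarrow\Psi\vdash\alpha\le\alpha$; $\Psi\vdash1\le1$; ($\Psi\vdash B_1\le A_1$, $\Psi\vdash A_2\le B_2$) $\Rightarrow\Psi\vdash A_1\to A_2\le B_1\to B_2$; ($\Psi\vdash\tau$ for a quantifier-free $\tau$ whose variables are in $\Psi$, $\Psi\vdash[\tau/\alpha]A\le B$) $\Rightarrow\Psi\vdash\forall\alpha.A\le B$; $\Psi,\beta\vdash A\le B\Rightarrow\Psi\vdash A\le\forall\beta.B$. Algorithmic types add existential variables $\hat\alpha$: $A ::= 1\mid\alpha\mid\hat\alpha\mid\forall\alpha.A\mid A\to B$; monotypes $\tau ::= 1\mid\alpha\mid\hat\alpha\mid\tau\to\tau'$. Algorithmic contexts $\Gamma ::= \cdot\mid\Gamma,\alpha\mid\Gamma,x:A\mid\Gamma,\hat\alpha\mid\Gamma,\hat\alpha=\tau\mid\Gamma,\blacktriangleright_{\hat\alpha}$, each variable declared at most once, each type/solution well-formed under the prefix to its left. $\Gamma\vdash A$: $\alpha$ declared in $\Gamma$, $\hat\alpha$ declared (solved or not), arrows componentwise, $\Gamma\vdash\forall\alpha.A$ iff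 $\Gamma,\alpha\vdash A$. $\Gamma[\Theta]$ denotes a context with $\Theta$ inside; $\Gamma[\hat\alpha][\hat\beta]$ means $\hat\alpha$ declared left of $\hat\beta$. $[\Gamma]A$ replaces each solved $\hat\alpha$ ($\hat\alpha=\tau\in\Gamma$) by $[\Gamma]\tau$, recursively. Variables introduced in premises are fresh. Algorithmic subtyping $\Gamma\vdash A<:B\dashv\Delta$: $\Gamma[\alpha]\vdash\alpha<:\alpha\dashv\Gamma[\alpha]$; $\Gamma\vdash1<:1\dashv\Gamma$; $\Gamma[\hat\alpha]\vdash\hat\alpha<:\hat\alpha\dashv\Gamma[\hat\alpha]$; ($\Gamma\vdash B_1<:A_1\dashv\Theta$, $\Theta\vdash[\Theta]A_2<:[\Theta]B_2\dashv\Delta$) $\Rightarrow\Gamma\vdash A_1\to A_2<:B_1\to B_2\dashv\Delta$; $\Gamma,\blacktriangleright_{\hat\alpha},\hat\alpha\vdash[\hat\alpha/\alpha]A<:B\dashv\Delta,\blacktriangleright_{\hat\alpha},\Theta\Rightarrow\Gamma\vdash\forall\alpha.A<:B\dashv\Delta$; $\Gamma,\alpha\vdash A<:B\dashv\Delta,\alpha,\Theta\Rightarrow\Gamma\vdash A<:\forall\alpha.B\dashv\Delta$; ($\hat\alpha\notin FV(A)$, $\Gamma[\hat\alpha]\vdash\hat\alpha:\leqq A\dashv\Delta$) $\Rightarrow\Gamma[\hat\alpha]\vdash\hat\alpha<:A\dashv\Delta$; ($\hat\alpha\notin FV(A)$, $\Gamma[\hat\alpha]\vdash A\leqq:\hat\alpha\dashv\Delta$)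 $\Rightarrow\Gamma[\hat\alpha]\vdash A<:\hat\alpha\dashv\Delta$. Instantiation $\Gamma\vdash\hat\alpha:\leqq A\dashv\Delta$: ($\Gamma\vdash\tau$) $\Rightarrow\Gamma,\hat\alpha,\Gamma'\vdash\hat\alpha:\leqq\tau\dashv\Gamma,\hat\alpha=\tau,\Gamma'$; $\Gamma[\hat\alpha][\hat\beta]\vdash\hat\alpha:\leqq\hat\beta\dashv\Gamma[\hat\alpha][\hat\beta=\hat\alpha]$; ($\Gamma[\hat\alpha_2,\hat\alpha_1,\hat\alpha=\hat\alpha_1\to\hat\alpha_2]\vdash A_1\leqq:\hat\alpha_1\dashv\Theta$, $\Theta\vdash\hat\alpha_2:\leqq[\Theta]A_2\dashv\Delta$) $\Rightarrow\Gamma[\hat\alpha]\vdash\hat\alpha:\leqq A_1\to A_2\dashv\Delta$; $\Gamma[\hat\alpha],\beta\vdash\hat\alpha:\leqq B\dashv\Delta,\beta,\Delta'\Rightarrow\Gamma[\hat\alpha]\vdash\hat\alpha:\leqq\forall\beta.B\dashv\Delta$. Instantiation $\Gamma\vdash A\leqq:\hat\alpha\dashv\Delta$: ($\Gamma\vdash\tau$) $\Rightarrow\Gamma,\hat\alpha,\Gamma'\vdash\tau\leqq:\hat\alpha\dashv\Gamma,\hat\alpha=\tau,\Gamma'$; $\Gamma[\hat\alpha][\hat\beta]\vdash\hat\beta\leqq:\hat\alpha\dashv\Gamma[\hat\alpha][\hat\beta=\hat\alpha]$; ($\Gamma[\hat\alpha_2,\hat\alpha_1,\hat\alpha=\hat\alpha_1\to\hat\alpha_2]\vdash\hat\alpha_1:\leqq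 A_1\dashv\Theta$, $\Theta\vdash[\Theta]A_2\leqq:\hat\alpha_2\dashv\Delta$) $\Rightarrow\Gamma[\hat\alpha]\vdash A_1\to A_2\leqq:\hat\alpha\dashv\Delta$; $\Gamma[\hat\alpha],\blacktriangleright_{\hat\beta},\hat\beta\vdash[\hat\beta/\beta]B\leqq:\hat\alpha\dashv\Delta,\blacktriangleright_{\hat\beta},\Delta'\Rightarrow\Gamma[\hat\alpha]\vdash\forall\beta.B\leqq:\hat\alpha\dashv\Delta$. *)

theory Defs
  imports Main
begin

text \<open>Types in locally nameless style: bound type variables are de Bruijn
indices (Bound), free universal variables are TVar, existential variables EVar.
Declarative types are those without EVar.\<close>

datatype ty = TUnit | Bound nat | TVar nat | EVar nat | All ty | Arr ty ty

fun open_k :: "nat \<Rightarrow> ty \<Rightarrow> ty \<Rightarrow> ty" where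
  "open_k k t TUnit = TUnit"
| "open_k k t (Bound i) = (if i = k then t else Bound i)"
| "open_k k t (TVar a) = TVar a"
| "open_k k t (EVar a) = EVar a"
| "open_k k t (All A) = All (open_k (Suc k) t A)"
| "open_k k t (Arr A B) = Arr (open_k k t A) (open_k k t B)"

definition open_typ :: "ty \<Rightarrow> ty \<Rightarrow> ty" where
  "open_typ A t = open_k 0 t A"

fun ftv :: "ty \<Rightarrow> nat set" where
  "ftv (TVar a) = {a}"
| "ftv (All A) = ftv A"
| "ftv (Arr A B) = ftv A \<union> ftv B"
| "ftv _ = {}"

fun fev :: "ty \<Rightarrow> nat set" where
  "fev (EVar a) = {a}"
| "fev (All A) = fev A"
| "fev (Arr A B) = fev A \<union> fev B"
| "fev _ = {}"

fun mono :: "ty \<Rightarrow> bool" where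
  "mono TUnit = True"
| "mono (Bound i) = False"
| "mono (TVar a) = True"
| "mono (EVar a) = True"
| "mono (All A) = False"
| "mono (Arr A B) = (mono A \<and> mono B)"

definition decl_typ :: "ty \<Rightarrow> bool" where
  "decl_typ A \<longleftrightarrow> fev A = {}"

fun subst_ev :: "nat \<Rightarrow> ty \<Rightarrow> ty \<Rightarrow> ty" where
  "subst_ev a t (EVar b) = (if a = b then t else EVar b)"
| "subst_ev a t (All A) = All (subst_ev a t A)"
| "subst_ev a t (Arr A B) = Arr (subst_ev a t A) (subst_ev a t B)"
| "subst_ev a t A = A"

text \<open>Context entries; contexts are lists, the rightmost element being the
most recently added one (Gamma, x  =  Gamma @ [x]).\<close>
datatype entry = CTVar nat | CVar nat ty | CEVar nat | CSolved nat ty | CMarker nat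

type_synonym ctx = "entry list"

fun tdom_e :: "entry \<Rightarrow> nat set" where
  "tdom_e (CTVar a) = {a}" | "tdom_e _ = {}"
fun vdom_e :: "entry \<Rightarrow> nat set" where
  "vdom_e (CVar x A) = {x}" | "vdom_e _ = {}"
fun edom_e :: "entry \<Rightarrow> nat set" where
  "edom_e (CEVar a) = {a}" | "edom_e (CSolved a t) = {a}" | "edom_e _ = {}"
fun mdom_e :: "entry \<Rightarrow> nat set" where
  "mdom_e (CMarker a) = {a}" | "mdom_e _ = {}"

definition tdom :: "ctx \<Rightarrow> nat set" where "tdom G = (\<Union>e\<in>set G. tdom_e e)"
definition vdom :: "ctx \<Rightarrow> nat set" where "vdom G = (\<Union>e\<in>set G. vdom_e e)"
definition edom :: "ctx \<Rightarrow> nat set" where "edom G = (\<Union>e\<in>set G. edom_e e)"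
definition mdom :: "ctx \<Rightarrow> nat set" where "mdom G = (\<Union>e\<in>set G. mdom_e e)"

text \<open>Well-formedness of types: wft_k G k A, where k counts enclosing binders.
Gamma |- A is wft G A (k = 0).\<close>
fun wft_k :: "ctx \<Rightarrow> nat \<Rightarrow> ty \<Rightarrow> bool" where
  "wft_k G k TUnit = True"
| "wft_k G k (Bound i) = (i < k)"
| "wft_k G k (TVar a) = (a \<in> tdom G)"
| "wft_k G k (EVar a) = (a \<in> edom G)"
| "wft_k G k (All A) = wft_k G (Suc k) A"
| "wft_k G k (Arr A B) = (wft_k G k A \<and> wft_k G k B)"

definition wft :: "ctx \<Rightarrow> ty \<Rightarrow> bool" where
  "wft G A = wft_k G 0 A"

inductive wf_ctx :: "ctx \<Rightarrow> bool" where
  wf_nil: "wf_ctx []"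
| wf_tvar: "wf_ctx G \<Longrightarrow> a \<notin> tdom G \<Longrightarrow> wf_ctx (G @ [CTVar a])"
| wf_var: "wf_ctx G \<Longrightarrow> x \<notin> vdom G \<Longrightarrow> wft G A \<Longrightarrow> wf_ctx (G @ [CVar x A])"
| wf_evar: "wf_ctx G \<Longrightarrow> a \<notin> edom G \<Longrightarrow> wf_ctx (G @ [CEVar a])"
| wf_solved: "wf_ctx G \<Longrightarrow> a \<notin> edom G \<Longrightarrow> mono t \<Longrightarrow> wft G t \<Longrightarrow> wf_ctx (G @ [CSolved a t])"
| wf_marker: "wf_ctx G \<Longrightarrow> a \<notin> edom G \<Longrightarrow> a \<notin> mdom G \<Longrightarrow> wf_ctx (G @ [CMarker a])"

fun decl_entry :: "entry \<Rightarrow> bool" where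
  "decl_entry (CTVar a) = True"
| "decl_entry (CVar x A) = decl_typ A"
| "decl_entry _ = False"

definition decl_ctx :: "ctx \<Rightarrow> bool" where
  "decl_ctx G \<longleftrightarrow> (\<forall>e\<in>set G. decl_entry e)"

text \<open>Applying a context as a substitution, [Gamma]A: solutions are substituted
from the right end of the context to the left, so that the solution of a variable
(which only mentions variables to its left) is itself resolved afterwards.\<close>
fun app_entry :: "entry \<Rightarrow> ty \<Rightarrow> ty" where
  "app_entry (CSolved a t) A = subst_ev a t A"
| "app_entry _ A = A"

definition applyc :: "ctx \<Rightarrow> ty \<Rightarrow> ty" where
  "applyc G A = foldr app_entry G A"

inductive decl_sub :: "ctx \<Rightarrow> ty \<Rightarrow> ty \<Rightarrow> bool" where
  dsub_var: "a \<in> tdom P \<Longrightarrow> decl_sub P (TVar a) (TVar a)"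
| dsub_unit: "decl_sub P TUnit TUnit"
| dsub_arr: "decl_sub P B1 A1 \<Longrightarrow> decl_sub P A2 B2 \<Longrightarrow> decl_sub P (Arr A1 A2) (Arr B1 B2)"
| dsub_allL: "mono t \<Longrightarrow> decl_typ t \<Longrightarrow> wft P t \<Longrightarrow> decl_sub P (open_typ A t) B
    \<Longrightarrow> decl_sub P (All A) B"
| dsub_allR: "b \<notin> tdom P \<Longrightarrow> b \<notin> ftv A \<Longrightarrow> b \<notin> ftv B
    \<Longrightarrow> decl_sub (P @ [CTVar b]) A (open_typ B (TVar b)) \<Longrightarrow> decl_sub P A (All B)"

text \<open>Instantiation: instL G a A D  is  G |- a^ :<= A -| D;
instR G A a D  is  G |- A <=: a^ -| D.  "Fresh" means not declared in the
context (existentials: neither as variable nor as marker) and not occurring in the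
types involved.\<close>
inductive instL :: "ctx \<Rightarrow> nat \<Rightarrow> ty \<Rightarrow> ctx \<Rightarrow> bool"
  and instR :: "ctx \<Rightarrow> ty \<Rightarrow> nat \<Rightarrow> ctx \<Rightarrow> bool" where
  instLSolve: "G = G0 @ [CEVar a] @ G1 \<Longrightarrow> mono t \<Longrightarrow> wft G0 t
    \<Longrightarrow> instL G a t (G0 @ [CSolved a t] @ G1)"
| instLReach: "G = G0 @ [CEVar a] @ G1 @ [CEVar b] @ G2
    \<Longrightarrow> instL G a (EVar b) (G0 @ [CEVar a] @ G1 @ [CSolved b (EVar a)] @ G2)"
| instLArr: "G = G0 @ [CEVar a] @ G1
    \<Longrightarrow> a1 \<notin> edom G \<union> mdom G \<union> fev (Arr A1 A2) \<Longrightarrow> a2 \<notin> edom G \<union> mdom G \<union> fev (Arr A1 A2)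
    \<Longrightarrow> a1 \<noteq> a2
    \<Longrightarrow> instR (G0 @ [CEVar a2, CEVar a1, CSolved a (Arr (EVar a1) (EVar a2))] @ G1) A1 a1 T
    \<Longrightarrow> instL T a2 (applyc T A2) D
    \<Longrightarrow> instL G a (Arr A1 A2) D"
| instLAllR: "CEVar a \<in> set G \<Longrightarrow> b \<notin> tdom G \<Longrightarrow> b \<notin> ftv B
    \<Longrightarrow> instL (G @ [CTVar b]) a (open_typ B (TVar b)) (D @ [CTVar b] @ D')
    \<Longrightarrow> instL G a (All B) D"
| instRSolve: "G = G0 @ [CEVar a] @ G1 \<Longrightarrow> mono t \<Longrightarrow> wft G0 t
    \<Longrightarrow> instR G t a (G0 @ [CSolved a t] @ G1)"
| instRReach: "G = G0 @ [CEVar a] @ G1 @ [CEVar b] @ G2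
    \<Longrightarrow> instR G (EVar b) a (G0 @ [CEVar a] @ G1 @ [CSolved b (EVar a)] @ G2)"
| instRArr: "G = G0 @ [CEVar a] @ G1
    \<Longrightarrow> a1 \<notin> edom G \<union> mdom G \<union> fev (Arr A1 A2) \<Longrightarrow> a2 \<notin> edom G \<union> mdom G \<union> fev (Arr A1 A2)
    \<Longrightarrow> a1 \<noteq> a2
    \<Longrightarrow> instL (G0 @ [CEVar a2, CEVar a1, CSolved a (Arr (EVar a1) (EVar a2))] @ G1) a1 A1 T
    \<Longrightarrow> instR T (applyc T A2) a2 D
    \<Longrightarrow> instR G (Arr A1 A2) a D"
| instRAllL: "CEVar a \<in> set G \<Longrightarrow> b \<notin> edom G \<union> mdom G \<union> fev B \<Longrightarrow> b \<noteq> a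
    \<Longrightarrow> instR (G @ [CMarker b, CEVar b]) (open_typ B (EVar b)) a (D @ [CMarker b] @ D')
    \<Longrightarrow> instR G (All B) a D"

inductive alg_sub :: "ctx \<Rightarrow> ty \<Rightarrow> ty \<Rightarrow> ctx \<Rightarrow> bool" where
  asub_var: "CTVar a \<in> set G \<Longrightarrow> alg_sub G (TVar a) (TVar a) G"
| asub_unit: "alg_sub G TUnit TUnit G"
| asub_evar: "CEVar a \<in> set G \<Longrightarrow> alg_sub G (EVar a) (EVar a) G"
| asub_arr: "alg_sub G B1 A1 T \<Longrightarrow> alg_sub T (applyc T A2) (applyc T B2) D
    \<Longrightarrow> alg_sub G (Arr A1 A2) (Arr B1 B2) D"
| asub_allL: "a \<notin> edom G \<union> mdom G \<union> fev A \<union> fev B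
    \<Longrightarrow> alg_sub (G @ [CMarker a, CEVar a]) (open_typ A (EVar a)) B (D @ [CMarker a] @ T)
    \<Longrightarrow> alg_sub G (All A) B D"
| asub_allR: "b \<notin> tdom G \<union> ftv A \<union> ftv B
    \<Longrightarrow> alg_sub (G @ [CTVar b]) A (open_typ B (TVar b)) (D @ [CTVar b] @ T)
    \<Longrightarrow> alg_sub G A (All B) D"
| asub_instL: "CEVar a \<in> set G \<Longrightarrow> a \<notin> fev A \<Longrightarrow> instL G a A D \<Longrightarrow> alg_sub G (EVar a) A D"
| asub_instR: "CEVar a \<in> set G \<Longrightarrow> a \<notin> fev A \<Longrightarrow> instR G A a D \<Longrightarrow> alg_sub G A (EVar a) D"

end

theory Submission
  imports Defs
begin


lemma edom_simps[simp]: "edom [] = {}" "edom (x#G) = edom_e x \<union> edom G" "edom (G@H) = edom G \<union> edom H"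
  by (auto simp: edom_def)
lemma tdom_simps[simp]: "tdom [] = {}" "tdom (x#G) = tdom_e x \<union> tdom G" "tdom (G@H) = tdom G \<union> tdom H"
  by (auto simp: tdom_def)
lemma mdom_simps[simp]: "mdom [] = {}" "mdom (x#G) = mdom_e x \<union> mdom G" "mdom (G@H) = mdom G \<union> mdom H"
  by (auto simp: mdom_def)

lemma finite_fev[simp]: "finite (fev A)" by (induction A) auto
lemma finite_edom[simp]: "finite (edom G)"
proof (induction G)
  case (Cons x G) then show ?case by (cases x) auto
qed simp
lemma finite_mdom[simp]: "finite (mdom G)"
proof (induction G)
  case (Cons x G) then show ?case by (cases x) auto
qed simp

fun isev :: "entry \<Rightarrow> bool" where
  "isev (CEVar _) = True" | "isev (CSolved _ _) = True" | "isev _ = False"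

fun okc :: "nat set \<Rightarrow> nat set \<Rightarrow> (nat \<Rightarrow> ty) \<Rightarrow> ctx \<Rightarrow> bool" where
  "okc S T \<sigma> [] = True"
| "okc S T \<sigma> (CTVar b # G) = okc S (insert b T) \<sigma> G"
| "okc S T \<sigma> (CVar x A # G) = okc S T \<sigma> G"
| "okc S T \<sigma> (CEVar a # G) = (a \<notin> S \<and> mono (\<sigma> a) \<and> fev (\<sigma> a) = {} \<and> ftv (\<sigma> a) \<subseteq> T \<and> okc (insert a S) T \<sigma> G)"
| "okc S T \<sigma> (CSolved a t # G) = (a \<notin> S \<and> fev t \<subseteq> S \<and> okc (insert a S) T \<sigma> G)"
| "okc S T \<sigma> (CMarker a # G) = okc S T \<sigma> G"

lemma okc_append: "okc S T \<sigma> (G @ H) = (okc S T \<sigma> G \<and> okc (S \<union> edom G) (T \<union> tdom G) \<sigma> H)"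
proof (induction G arbitrary: S T)
  case (Cons x G) then show ?case by (cases x) (auto simp: insert_commute)
qed simp

lemma okc_noev: "\<forall>x\<in>set G. \<not> isev x \<Longrightarrow> okc S T \<sigma> G"
proof (induction G arbitrary: S T)
  case (Cons x G) then show ?case by (cases x) auto
qed simp

lemma okc_names: "okc S T \<sigma> G \<Longrightarrow> edom G \<inter> S = {}"
proof (induction G arbitrary: S T)
  case (Cons x G) then show ?case by (cases x) auto
qed simp

lemma okc_cong: "okc S T \<sigma> G \<Longrightarrow> (\<forall>x. CEVar x \<in> set G \<longrightarrow> \<sigma>' x = \<sigma> x) \<Longrightarrow> okc S T \<sigma>' G"
proof (induction G arbitrary: S T)
  case (Cons x G) then show ?case by (cases x) auto
qed simp

lemma okc_monoS: "okc S T \<sigma> G \<Longrightarrow> S \<subseteq> S' \<Longrightarrow> (S' - S) \<inter> edom G = {} \<Longrightarrow> okc S' T \<sigma> G"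
proof (induction G arbitrary: S S' T)
  case (Cons x G)
  show ?case
  proof (cases x)
    case (CEVar a)
    have "okc (insert a S') T \<sigma> G"
      by (rule Cons.IH[of "insert a S"]) (use Cons.prems CEVar in auto)
    then show ?thesis using Cons.prems CEVar by auto
  next
    case (CSolved a t)
    have "okc (insert a S') T \<sigma> G"
      by (rule Cons.IH[of "insert a S"]) (use Cons.prems CSolved in auto)
    then show ?thesis using Cons.prems CSolved by auto
  next
    case (CTVar b)
    have "okc S' (insert b T) \<sigma> G"
      by (rule Cons.IH[of "S"]) (use Cons.prems CTVar in auto)
    then show ?thesis using CTVar by auto
  next
    case (CVar y A)
    have "okc S' T \<sigma> G"
      by (rule Cons.IH[of "S"]) (use Cons.prems CVar in auto)
    then show ?thesis using CVar by auto
  next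
    case (CMarker b)
    have "okc S' T \<sigma> G"
      by (rule Cons.IH[of "S"]) (use Cons.prems CMarker in auto)
    then show ?thesis using CMarker by auto
  qed
qed simp

lemma okc_unique: "okc S T \<sigma> G \<Longrightarrow> CEVar x \<in> set G \<Longrightarrow> CSolved x s \<notin> set G"
proof (induction G arbitrary: S T)
  case (Cons y G)
  then show ?case
  proof (cases y)
    case (CEVar a)
    with Cons show ?thesis using okc_names[of "insert a S" T \<sigma> G] by (force simp: edom_def)
  next
    case (CSolved a t)
    with Cons show ?thesis using okc_names[of "insert a S" T \<sigma> G] by (force simp: edom_def)
  qed auto
qed simp

lemma in_edom: "CEVar x \<in> set G \<Longrightarrow> x \<in> edom G" "CSolved x s \<in> set G \<Longrightarrow> x \<in> edom G"
  by (force simp: edom_def)+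

lemma okc_ev: "okc S T \<sigma> G \<Longrightarrow> CEVar x \<in> set G \<Longrightarrow> mono (\<sigma> x) \<and> fev (\<sigma> x) = {}"
proof (induction G arbitrary: S T)
  case (Cons y G) then show ?case by (cases y) auto
qed simp

fun msubst :: "(nat \<Rightarrow> ty) \<Rightarrow> ty \<Rightarrow> ty" where
  "msubst \<theta> (EVar a) = \<theta> a"
| "msubst \<theta> (All A) = All (msubst \<theta> A)"
| "msubst \<theta> (Arr A B) = Arr (msubst \<theta> A) (msubst \<theta> B)"
| "msubst \<theta> A = A"

lemma subst_ev_id: "a \<notin> fev A \<Longrightarrow> subst_ev a t A = A" by (induction A) auto
lemma fev_subst_ev: "fev (subst_ev a t A) \<subseteq> (fev A - {a}) \<union> fev t" by (induction A) auto
lemma fev_msubst: "fev (msubst \<theta> A) = (\<Union>x\<in>fev A. fev (\<theta> x))" by (induction A) auto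
lemma msubst_cong: "(\<forall>x\<in>fev A. \<theta> x = \<theta>' x) \<Longrightarrow> msubst \<theta> A = msubst \<theta>' A" by (induction A) auto
lemma msubst_comp: "msubst \<theta>1 (msubst \<theta>2 A) = msubst (\<lambda>x. msubst \<theta>1 (\<theta>2 x)) A" by (induction A) auto
lemma msubst_subst_ev: "\<theta> x = msubst \<theta> s \<Longrightarrow> msubst \<theta> (subst_ev x s Z) = msubst \<theta> Z" by (induction Z) auto
lemma msubst_EVar: "msubst EVar A = A" by (induction A) auto
lemma ftv_msubst: "ftv A \<subseteq> ftv (msubst \<theta> A)" by (induction A) auto
lemma msubst_nofev: "fev A = {} \<Longrightarrow> msubst \<theta> A = A" by (induction A) auto

lemma applyc_Nil[simp]: "applyc [] A = A" by (simp add: applyc_def)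
lemma applyc_Cons[simp]: "applyc (e#G) A = app_entry e (applyc G A)" by (simp add: applyc_def)
lemma applyc_append: "applyc (G@H) A = applyc G (applyc H A)" by (simp add: applyc_def)

lemma app_entry_simps[simp]: "app_entry e (Arr A B) = Arr (app_entry e A) (app_entry e B)"
  "app_entry e (All A) = All (app_entry e A)" "app_entry e TUnit = TUnit" "app_entry e (TVar a) = TVar a"
  "app_entry e (Bound i) = Bound i"
  by (cases e; simp)+

lemma applyc_simps[simp]: "applyc G (Arr A B) = Arr (applyc G A) (applyc G B)"
  "applyc G (All A) = All (applyc G A)" "applyc G TUnit = TUnit" "applyc G (TVar a) = TVar a"
  "applyc G (Bound i) = Bound i"
  by (induction G) auto

lemma applyc_msubst: "applyc G A = msubst (\<lambda>x. applyc G (EVar x)) A" by (induction A) auto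

lemma applyc_nosolved: "(\<forall>x\<in>fev A. \<forall>s. CSolved x s \<notin> set G) \<Longrightarrow> applyc G A = A"
proof (induction G)
  case (Cons e G) then show ?case by (cases e) (auto simp: subst_ev_id)
qed simp

lemma applyc_noedom: "fev A \<inter> edom G = {} \<Longrightarrow> applyc G A = A"
  by (rule applyc_nosolved) (force simp: edom_def)

lemma applyc_unsolved: "okc S T \<sigma> G \<Longrightarrow> CEVar x \<in> set G \<Longrightarrow> applyc G (EVar x) = EVar x"
  by (rule applyc_nosolved) (auto dest: okc_unique)

lemma applyc_K:
  assumes ok: "okc S T \<sigma> G" and s: "CSolved x s \<in> set G"
  shows "applyc G (EVar x) = applyc G s"
proof -
  obtain G1 G2 where G: "G = G1 @ CSolved x s # G2" using s by (meson split_list)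
  from ok[unfolded G okc_append] have o1: "okc (S \<union> edom G1) (T \<union> tdom G1) \<sigma> (CSolved x s # G2)" by simp
  then have x1: "x \<notin> S \<union> edom G1" and fs: "fev s \<subseteq> S \<union> edom G1"
    and o2: "okc (insert x (S \<union> edom G1)) (T \<union> tdom G1) \<sigma> G2" by auto
  from okc_names[OF o2] have d: "edom G2 \<inter> insert x (S \<union> edom G1) = {}" .
  have a: "applyc G2 (EVar x) = EVar x" using d by (intro applyc_noedom) auto
  have b: "applyc G2 s = s" using d fs by (intro applyc_noedom) auto
  have c: "subst_ev x s s = s" using x1 fs by (intro subst_ev_id) auto
  show ?thesis unfolding G applyc_append using a b c by simp
qed

lemma applyc_idem:
  assumes ok: "okc S T \<sigma> D" and sol: "\<forall>x s. CSolved x s \<in> set G \<longrightarrow> CSolved x s \<in> set D"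
  shows "applyc D (applyc G Y) = applyc D Y"
  using sol
proof (induction G arbitrary: Y)
  case (Cons e G)
  have IH: "applyc D (applyc G Y) = applyc D Y" using Cons by auto
  show ?case
  proof (cases e)
    case (CSolved x s)
    then have "CSolved x s \<in> set D" using Cons.prems by auto
    then have K: "applyc D (EVar x) = applyc D s" using applyc_K[OF ok] by blast
    have e: "(\<lambda>y. applyc D (EVar y)) x = msubst (\<lambda>y. applyc D (EVar y)) s"
      using K applyc_msubst[of D s] by simp
    have "applyc D (subst_ev x s Z) = applyc D Z" for Z
      using msubst_subst_ev[OF e, of Z] applyc_msubst[of D] by metis
    then have "applyc D (subst_ev x s (applyc G Y)) = applyc D (applyc G Y)" .
    then show ?thesis using CSolved IH by simp
  qed (use IH in simp_all)
qed simp

lemma fev_applyc: "okc S T \<sigma> G \<Longrightarrow> x \<in> fev (applyc G Y) \<Longrightarrow> CEVar x \<in> set G \<or> (x \<in> fev Y \<and> x \<notin> edom G) \<or> x \<in> S"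
proof (induction G arbitrary: S T)
  case (Cons e G)
  show ?case
  proof (cases e)
    case (CSolved a t)
    with Cons.prems have ok: "okc (insert a S) T \<sigma> G" and ft: "fev t \<subseteq> S" and aS: "a \<notin> S" by auto
    from Cons.prems CSolved have "x \<in> fev (subst_ev a t (applyc G Y))" by simp
    with fev_subst_ev have "(x \<in> fev (applyc G Y) \<and> x \<noteq> a) \<or> x \<in> fev t" by blast
    then show ?thesis
    proof
      assume h: "x \<in> fev (applyc G Y) \<and> x \<noteq> a"
      from Cons.IH[OF ok] h show ?thesis using CSolved by auto
    qed (use ft in auto)
  next
    case (CEVar a)
    with Cons.prems have ok: "okc (insert a S) T \<sigma> G" by auto
    from Cons.IH[OF ok] Cons.prems CEVar show ?thesis by auto
  next
    case (CTVar b)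
    with Cons.prems have ok: "okc S (insert b T) \<sigma> G" by auto
    from Cons.IH[OF ok] Cons.prems CTVar show ?thesis by auto
  qed (use Cons in auto)
qed simp

definition appd :: "ctx \<Rightarrow> ty \<Rightarrow> bool" where
  "appd G A \<longleftrightarrow> (\<forall>x\<in>fev A. CEVar x \<in> set G)"

lemma appd_applyc: "okc {} T \<sigma> G \<Longrightarrow> fev Y \<subseteq> edom G \<Longrightarrow> appd G (applyc G Y)"
  unfolding appd_def using fev_applyc by blast

lemma appd_id: "okc S T \<sigma> G \<Longrightarrow> appd G A \<Longrightarrow> applyc G A = A"
  unfolding appd_def by (rule applyc_nosolved) (auto dest: okc_unique)

lemma appd_edom: "appd G A \<Longrightarrow> fev A \<subseteq> edom G"
  unfolding appd_def using in_edom by blast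



definition refines :: "ctx \<Rightarrow> ctx \<Rightarrow> bool" where
  "refines G D \<longleftrightarrow> (\<exists>f. D = concat (map f G) \<and> (\<forall>x. \<not> isev x \<longrightarrow> f x = [x])
     \<and> (\<forall>x s. f (CSolved x s) = [CSolved x s])
     \<and> (\<forall>e. (\<forall>y\<in>set (f (CEVar e)). isev y) \<and> e \<in> edom (f (CEVar e))))"

lemma concat_single: "concat (map (\<lambda>x. [x]) G) = G" by (induction G) auto

lemma refines_refl: "refines G G"
  unfolding refines_def by (rule exI[of _ "\<lambda>x. [x]"]) (auto simp: concat_single)

lemma edom_concat: "edom (concat L) = (\<Union>l\<in>set L. edom l)" by (induction L) auto
lemma tdom_concat: "tdom (concat L) = (\<Union>l\<in>set L. tdom l)" by (induction L) auto
lemma set_concat_map: "set (concat (map f G)) = (\<Union>x\<in>set G. set (f x))" by auto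

lemma isev_tdom: "(\<forall>y\<in>set L. isev y) \<Longrightarrow> tdom L = {}"
  unfolding tdom_def by (force elim: isev.elims)

lemma concat_map_concat: "concat (map g (concat xs)) = concat (map (\<lambda>x. concat (map g x)) xs)"
  by (induction xs) auto

lemma refines_trans:
  assumes "refines G T" "refines T D" shows "refines G D"
proof -
  obtain f where f: "T = concat (map f G)" "\<forall>x. \<not> isev x \<longrightarrow> f x = [x]" "\<forall>x s. f (CSolved x s) = [CSolved x s]"
    "\<forall>e. (\<forall>y\<in>set (f (CEVar e)). isev y) \<and> e \<in> edom (f (CEVar e))"
    using assms(1) unfolding refines_def by blast
  obtain g where g: "D = concat (map g T)" "\<forall>x. \<not> isev x \<longrightarrow> g x = [x]" "\<forall>x s. g (CSolved x s) = [CSolved x s]"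
    "\<forall>e. (\<forall>y\<in>set (g (CEVar e)). isev y) \<and> e \<in> edom (g (CEVar e))"
    using assms(2) unfolding refines_def by blast
  define h where "h x = concat (map g (f x))" for x
  have 1: "D = concat (map h G)" unfolding g(1) f(1) h_def concat_map_concat by (simp add: o_def)
  have 2: "\<forall>x. \<not> isev x \<longrightarrow> h x = [x]" using f(2) g(2) unfolding h_def by auto
  have 3: "\<forall>x s. h (CSolved x s) = [CSolved x s]" using f(3) g(3) unfolding h_def by auto
  have 4: "(\<forall>y\<in>set (h (CEVar e)). isev y) \<and> e \<in> edom (h (CEVar e))" for e
  proof
    show "\<forall>y\<in>set (h (CEVar e)). isev y"
    proof
      fix y assume "y \<in> set (h (CEVar e))"
      then obtain z where z: "z \<in> set (f (CEVar e))" "y \<in> set (g z)" unfolding h_def by auto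
      have "isev z" using z f(4) by blast
      then show "isev y" using z g by (cases z) auto
    qed
  next
    obtain z where z: "z \<in> set (f (CEVar e))" "e \<in> edom_e z" using f(4) unfolding edom_def by blast
    have "isev z" using z f(4) by blast
    then have "e \<in> edom (g z)" using z g(3,4) by (cases z) auto
    then show "e \<in> edom (h (CEVar e))" unfolding h_def edom_concat using z by auto
  qed
  show ?thesis unfolding refines_def using 1 2 3 4 by blast
qed

lemma refines_tdom: "refines G D \<Longrightarrow> tdom D = tdom G"
proof -
  assume "refines G D"
  then obtain f where f: "D = concat (map f G)" "\<forall>x. \<not> isev x \<longrightarrow> f x = [x]" "\<forall>x s. f (CSolved x s) = [CSolved x s]"
    "\<forall>e. (\<forall>y\<in>set (f (CEVar e)). isev y) \<and> e \<in> edom (f (CEVar e))"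
    unfolding refines_def by blast
  have "tdom (f x) = tdom_e x" for x
  proof (cases "isev x")
    case True then show ?thesis using f(3,4) isev_tdom by (cases x) auto
  qed (use f(2) in simp)
  then show ?thesis unfolding f(1) tdom_concat by (simp add: tdom_def)
qed

lemma refines_edom: "refines G D \<Longrightarrow> edom G \<subseteq> edom D"
proof -
  assume "refines G D"
  then obtain f where f: "D = concat (map f G)" "\<forall>x. \<not> isev x \<longrightarrow> f x = [x]" "\<forall>x s. f (CSolved x s) = [CSolved x s]"
    "\<forall>e. (\<forall>y\<in>set (f (CEVar e)). isev y) \<and> e \<in> edom (f (CEVar e))"
    unfolding refines_def by blast
  have "edom_e x \<subseteq> edom (f x)" for x
  proof (cases "isev x")
    case True then show ?thesis using f(3,4) by (cases x) auto
  qed (use f(2) in simp)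
  then show ?thesis unfolding f(1) edom_concat
  proof -
    assume h: "\<And>x. edom_e x \<subseteq> edom (f x)"
    show "edom G \<subseteq> (\<Union>l\<in>set (map f G). edom l)"
    proof
      fix e assume "e \<in> edom G"
      then obtain x where "x \<in> set G" "e \<in> edom_e x" unfolding edom_def by blast
      then show "e \<in> (\<Union>l\<in>set (map f G). edom l)" using h by auto
    qed
  qed
qed

lemma refines_solved: "refines G D \<Longrightarrow> CSolved x s \<in> set G \<Longrightarrow> CSolved x s \<in> set D"
proof -
  assume r: "refines G D" and s: "CSolved x s \<in> set G"
  then obtain f where f: "D = concat (map f G)" "\<forall>x s. f (CSolved x s) = [CSolved x s]"
    unfolding refines_def by blast
  have "set (f (CSolved x s)) \<subseteq> set D" unfolding f(1) using s by auto
  then show ?thesis using f(2) by simp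
qed

lemma refines_snoc1:
  assumes "\<not> isev x" "refines (G @ [x]) D" shows "\<exists>D1. D = D1 @ [x] \<and> refines G D1"
proof -
  obtain f where f: "D = concat (map f (G @ [x]))" "\<forall>x. \<not> isev x \<longrightarrow> f x = [x]" "\<forall>x s. f (CSolved x s) = [CSolved x s]"
    "\<forall>e. (\<forall>y\<in>set (f (CEVar e)). isev y) \<and> e \<in> edom (f (CEVar e))"
    using assms(2) unfolding refines_def by blast
  have "D = concat (map f G) @ [x]" using f(1,2) assms(1) by simp
  moreover have "refines G (concat (map f G))" unfolding refines_def using f by blast
  ultimately show ?thesis by blast
qed

lemma refines_snoc2:
  assumes "refines (G @ [CMarker a, CEVar a]) D"
  shows "\<exists>D1 T. D = D1 @ [CMarker a] @ T \<and> refines G D1 \<and> (\<forall>y\<in>set T. isev y)"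
proof -
  obtain f where f: "D = concat (map f (G @ [CMarker a, CEVar a]))" "\<forall>x. \<not> isev x \<longrightarrow> f x = [x]" "\<forall>x s. f (CSolved x s) = [CSolved x s]"
    "\<forall>e. (\<forall>y\<in>set (f (CEVar e)). isev y) \<and> e \<in> edom (f (CEVar e))"
    using assms unfolding refines_def by blast
  have "D = concat (map f G) @ [CMarker a] @ f (CEVar a)" using f(1,2) by simp
  moreover have "refines G (concat (map f G))" unfolding refines_def using f by blast
  ultimately show ?thesis using f(4) by blast
qed

lemma refines_replace:
  assumes "CEVar a \<notin> set G0" "CEVar a \<notin> set G1" "\<forall>y\<in>set L. isev y" "a \<in> edom L"
  shows "refines (G0 @ CEVar a # G1) (G0 @ L @ G1)"
proof -
  define f where "f x = (if x = CEVar a then L else [x])" for x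
  have "concat (map f H) = H" if "CEVar a \<notin> set H" for H
    using that by (induction H) (auto simp: f_def)
  then have "G0 @ L @ G1 = concat (map f (G0 @ CEVar a # G1))" using assms by (simp add: f_def)
  then show ?thesis unfolding refines_def using assms(3,4)
    by (intro exI[of _ f]) (auto simp: f_def)
qed

definition extsem :: "ctx \<Rightarrow> (nat \<Rightarrow> ty) \<Rightarrow> ctx \<Rightarrow> (nat \<Rightarrow> ty) \<Rightarrow> bool" where
  "extsem G \<sigma> D \<sigma>' \<longleftrightarrow> (\<forall>Y. fev Y \<subseteq> edom G \<longrightarrow> msubst \<sigma>' (applyc D Y) = msubst \<sigma> (applyc G Y))"

lemma extsem_intro:
  assumes okG: "okc {} {} \<sigma> G" and okD: "okc {} {} \<sigma>' D" and r: "refines G D"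
    and h: "\<forall>x. CEVar x \<in> set G \<longrightarrow> msubst \<sigma>' (applyc D (EVar x)) = \<sigma> x"
  shows "extsem G \<sigma> D \<sigma>'"
  unfolding extsem_def
proof (intro allI impI)
  fix Y assume Y: "fev Y \<subseteq> edom G"
  define Z where "Z = applyc G Y"
  have ap: "appd G Z" unfolding Z_def by (rule appd_applyc[OF okG Y])
  have "applyc D Y = applyc D Z" unfolding Z_def
    by (rule applyc_idem[OF okD, symmetric]) (use refines_solved[OF r] in blast)
  also have "\<dots> = msubst (\<lambda>x. applyc D (EVar x)) Z" by (rule applyc_msubst)
  finally have "msubst \<sigma>' (applyc D Y) = msubst (\<lambda>x. msubst \<sigma>' (applyc D (EVar x))) Z"
    by (simp add: msubst_comp)
  also have "\<dots> = msubst \<sigma> Z" using ap h unfolding appd_def by (intro msubst_cong) auto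
  finally show "msubst \<sigma>' (applyc D Y) = msubst \<sigma> (applyc G Y)" unfolding Z_def .
qed

lemma extsem_trans: "refines G T \<Longrightarrow> extsem G \<sigma> T \<sigma>1 \<Longrightarrow> extsem T \<sigma>1 D \<sigma>2 \<Longrightarrow> extsem G \<sigma> D \<sigma>2"
  unfolding extsem_def using refines_edom by (metis subset_trans)

lemma okc_split3: "okc {} {} \<sigma> (G0 @ CEVar a # G1) \<Longrightarrow>
   okc {} {} \<sigma> G0 \<and> a \<notin> edom G0 \<and> mono (\<sigma> a) \<and> fev (\<sigma> a) = {} \<and> ftv (\<sigma> a) \<subseteq> tdom G0
   \<and> okc (insert a (edom G0)) (tdom G0) \<sigma> G1 \<and> edom G1 \<inter> insert a (edom G0) = {}"
  using okc_names[of "insert a (edom G0)" "tdom G0" \<sigma> G1] by (auto simp: okc_append)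

lemma replace_solve:
  assumes ok: "okc {} {} \<sigma> G" and G: "G = H0 @ CEVar x # H1" and fs: "fev s \<subseteq> edom H0"
    and ap: "appd G s" and eq: "msubst \<sigma> s = \<sigma> x"
  defines "D \<equiv> H0 @ CSolved x s # H1"
  shows "refines G D \<and> okc {} {} \<sigma> D \<and> tdom D = tdom G \<and> extsem G \<sigma> D \<sigma>
    \<and> (\<forall>e. CEVar e \<in> set G \<longrightarrow> e \<noteq> x \<longrightarrow> CEVar e \<in> set D)
    \<and> (\<forall>Y. appd G Y \<longrightarrow> fev (applyc D Y) \<subseteq> fev Y \<union> fev s)"
proof -
  note o = okc_split3[OF ok[unfolded G]]
  have n0: "CEVar x \<notin> set H0" "CEVar x \<notin> set H1" using o in_edom by blast+
  have okD: "okc {} {} \<sigma> D" unfolding D_def using o fs by (auto simp: okc_append)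
  have r: "refines G D" unfolding G D_def using refines_replace[OF n0, of "[CSolved x s]"] by simp
  have un: "\<forall>e. CEVar e \<in> set G \<longrightarrow> e \<noteq> x \<longrightarrow> CEVar e \<in> set D" unfolding G D_def by auto
  have xs: "x \<notin> fev s" using fs o by auto
  have hD: "applyc D (EVar y) = (if y = x then s else EVar y)" if "CEVar y \<in> set G" for y
  proof (cases "y = x")
    case True
    have "CSolved x s \<in> set D" unfolding D_def by simp
    then have "applyc D (EVar x) = applyc D s" by (rule applyc_K[OF okD])
    also have "\<dots> = s"
    proof (rule appd_id[OF okD])
      show "appd D s" using ap xs un unfolding appd_def by blast
    qed
    finally show ?thesis using True by simp
  next
    case False then show ?thesis using applyc_unsolved[OF okD] un that by auto
  qed
  have ex: "extsem G \<sigma> D \<sigma>"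
    by (rule extsem_intro[OF ok okD r]) (use hD eq in auto)
  have fv: "fev (applyc D Y) \<subseteq> fev Y \<union> fev s" if "appd G Y" for Y
  proof -
    have "fev (applyc D Y) = (\<Union>y\<in>fev Y. fev (applyc D (EVar y)))"
      by (subst applyc_msubst) (simp add: fev_msubst)
    also have "\<dots> \<subseteq> fev Y \<union> fev s" using that hD unfolding appd_def by (auto split: if_split_asm)
    finally show ?thesis .
  qed
  show ?thesis using r okD ex un fv unfolding D_def G by auto
qed

lemma replace_split:
  assumes ok: "okc {} {} \<sigma> G" and G: "G = G0 @ CEVar a # G1" and sa: "\<sigma> a = Arr t1 t2"
    and f1: "a1 \<notin> edom G" and f2: "a2 \<notin> edom G" and ne: "a1 \<noteq> a2"
  defines "G' \<equiv> G0 @ [CEVar a2, CEVar a1, CSolved a (Arr (EVar a1) (EVar a2))] @ G1"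
    and "\<sigma>' \<equiv> \<sigma>(a1 := t1, a2 := t2)"
  shows "refines G G' \<and> okc {} {} \<sigma>' G' \<and> tdom G' = tdom G \<and> extsem G \<sigma> G' \<sigma>'
    \<and> (\<forall>e. CEVar e \<in> set G \<longrightarrow> e \<noteq> a \<longrightarrow> CEVar e \<in> set G')
    \<and> (\<forall>Y. appd G Y \<longrightarrow> fev (applyc G' Y) \<subseteq> fev Y \<union> {a1, a2})
    \<and> CEVar a1 \<in> set G' \<and> CEVar a2 \<in> set G' \<and> edom G' = edom G \<union> {a1, a2}"
proof -
  note o = okc_split3[OF ok[unfolded G]]
  have n0: "CEVar a \<notin> set G0" "CEVar a \<notin> set G1" using o in_edom by blast+
  have aa: "a \<noteq> a1" "a \<noteq> a2" using f1 f2 G by auto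
  have sg: "\<sigma>' x = \<sigma> x" if "CEVar x \<in> set G" for x
    using that in_edom(1)[OF that] f1 f2 unfolding \<sigma>'_def by auto
  have ok0: "okc {} {} \<sigma>' G0" using okc_cong[of "{}" "{}" \<sigma> G0 \<sigma>'] o sg G by auto
  have ok1: "okc (insert a (edom G0)) (tdom G0) \<sigma>' G1"
    using okc_cong[of _ _ \<sigma> G1 \<sigma>'] o sg G by auto
  have ok1': "okc (insert a (insert a1 (insert a2 (edom G0)))) (tdom G0) \<sigma>' G1"
    by (rule okc_monoS[OF ok1]) (use f1 f2 G in auto)
  have t12: "mono t1 \<and> mono t2 \<and> fev t1 = {} \<and> fev t2 = {} \<and> ftv t1 \<subseteq> tdom G0 \<and> ftv t2 \<subseteq> tdom G0"
    using o sa by auto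
  have okG': "okc {} {} \<sigma>' G'" unfolding G'_def okc_append
    using ok0 ok1' t12 f1 f2 ne aa G o unfolding \<sigma>'_def by (auto simp: insert_commute)
  have r: "refines G G'" unfolding G G'_def
    using refines_replace[OF n0, of "[CEVar a2, CEVar a1, CSolved a (Arr (EVar a1) (EVar a2))]"] by simp
  have un: "\<forall>e. CEVar e \<in> set G \<longrightarrow> e \<noteq> a \<longrightarrow> CEVar e \<in> set G'" unfolding G G'_def by auto
  have hD: "applyc G' (EVar y) = (if y = a then Arr (EVar a1) (EVar a2) else EVar y)" if "CEVar y \<in> set G" for y
  proof (cases "y = a")
    case True
    have "CSolved a (Arr (EVar a1) (EVar a2)) \<in> set G'" unfolding G'_def by simp
    then have "applyc G' (EVar a) = applyc G' (Arr (EVar a1) (EVar a2))" by (rule applyc_K[OF okG'])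
    also have "\<dots> = Arr (EVar a1) (EVar a2)"
      using applyc_unsolved[OF okG', of a1] applyc_unsolved[OF okG', of a2] unfolding G'_def by simp
    finally show ?thesis using True by simp
  next
    case False then show ?thesis using applyc_unsolved[OF okG'] un that by auto
  qed
  have ex: "extsem G \<sigma> G' \<sigma>'"
    by (rule extsem_intro[OF ok okG' r]) (use hD sa sg aa ne in \<open>auto simp: \<sigma>'_def\<close>)
  have fv: "fev (applyc G' Y) \<subseteq> fev Y \<union> {a1, a2}" if "appd G Y" for Y
  proof -
    have "fev (applyc G' Y) = (\<Union>y\<in>fev Y. fev (applyc G' (EVar y)))"
      by (subst applyc_msubst) (simp add: fev_msubst)
    also have "\<dots> \<subseteq> fev Y \<union> {a1, a2}" using that hD unfolding appd_def by (auto split: if_split_asm)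
    finally show ?thesis .
  qed
  have ed: "edom G' = edom G \<union> {a1, a2}" unfolding G'_def G by auto
  show ?thesis using r okG' ex un fv ed unfolding G'_def G by auto
qed



lemma trunc_tvar:
  assumes r: "refines (G @ [CTVar b]) D0" and ok: "okc {} {} \<sigma> D0"
    and ex: "extsem (G @ [CTVar b]) \<sigma>0 D0 \<sigma>"
  shows "\<exists>D. D0 = D @ [CTVar b] \<and> refines G D \<and> okc {} {} \<sigma> D \<and> extsem G \<sigma>0 D \<sigma>
     \<and> (\<forall>e. CEVar e \<in> set D0 \<longrightarrow> CEVar e \<in> set D) \<and> (\<forall>Y. applyc D0 Y = applyc D Y)"
proof -
  obtain D where D: "D0 = D @ [CTVar b]" "refines G D" using refines_snoc1[OF _ r] by auto
  have okD: "okc {} {} \<sigma> D" using ok D(1) by (simp add: okc_append)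
  have ap: "applyc D0 Y = applyc D Y" for Y unfolding D(1) applyc_append by simp
  have ap2: "applyc (G @ [CTVar b]) Y = applyc G Y" for Y unfolding applyc_append by simp
  have "extsem G \<sigma>0 D \<sigma>" using ex unfolding extsem_def ap ap2 by auto
  then show ?thesis using D okD ap by auto
qed

lemma trunc_marker:
  assumes r: "refines (G @ [CMarker a, CEVar a]) D0" and ok: "okc {} {} \<sigma> D0"
    and ex: "extsem (G @ [CMarker a, CEVar a]) \<sigma>1 D0 \<sigma>" and okG: "okc {} {} \<sigma>0 G"
    and aG: "a \<notin> edom G" and s1: "\<forall>x. x \<noteq> a \<longrightarrow> \<sigma>1 x = \<sigma>0 x"
  shows "\<exists>D T. D0 = D @ [CMarker a] @ T \<and> refines G D \<and> okc {} {} \<sigma> D \<and> extsem G \<sigma>0 D \<sigma>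
     \<and> (\<forall>e. CEVar e \<in> set D0 \<longrightarrow> e \<in> edom G \<longrightarrow> CEVar e \<in> set D)
     \<and> (\<forall>Y. fev Y \<subseteq> edom G \<longrightarrow> applyc D0 Y = applyc D Y)"
proof -
  obtain D T where D: "D0 = D @ [CMarker a] @ T" "refines G D" "\<forall>y\<in>set T. isev y"
    using refines_snoc2[OF r] by blast
  have okD: "okc {} {} \<sigma> D" and okT: "okc (edom D) (tdom D) \<sigma> T"
    using ok D(1) by (simp_all add: okc_append)
  have dis: "edom T \<inter> edom D = {}" using okc_names[OF okT] .
  have sub: "edom G \<subseteq> edom D" by (rule refines_edom[OF D(2)])
  have ap: "applyc D0 Y = applyc D Y" if "fev Y \<subseteq> edom G" for Y
  proof -
    have "applyc T Y = Y" using that dis sub by (intro applyc_noedom) auto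
    then show ?thesis unfolding D(1) applyc_append by simp
  qed
  have ap2: "applyc (G @ [CMarker a, CEVar a]) Y = applyc G Y" for Y unfolding applyc_append by simp
  have ev: "CEVar e \<in> set D" if "CEVar e \<in> set D0" "e \<in> edom G" for e
  proof -
    have "CEVar e \<notin> set T" using that sub dis in_edom(1)[of e T] by blast
    then show ?thesis using that D(1) by auto
  qed
  have "extsem G \<sigma>0 D \<sigma>" unfolding extsem_def
  proof (intro allI impI)
    fix Y assume Y: "fev Y \<subseteq> edom G"
    have "msubst \<sigma> (applyc D Y) = msubst \<sigma>1 (applyc G Y)"
      using ex Y unfolding extsem_def ap[OF Y, symmetric] ap2 by auto
    also have "\<dots> = msubst \<sigma>0 (applyc G Y)"
    proof (rule msubst_cong, intro ballI)
      fix x assume "x \<in> fev (applyc G Y)"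
      with fev_applyc[OF okG] have "x \<in> edom G" using Y in_edom(1) by blast
      then show "\<sigma>1 x = \<sigma>0 x" using s1 aG by auto
    qed
    finally show "msubst \<sigma> (applyc D Y) = msubst \<sigma>0 (applyc G Y)" .
  qed
  then show ?thesis using D okD ap ev by blast
qed

fun nob :: "ty \<Rightarrow> bool" where
  "nob (Bound _) = False" | "nob (All A) = nob A" | "nob (Arr A B) = (nob A \<and> nob B)" | "nob _ = True"

lemma mono_nob: "mono t \<Longrightarrow> nob t" by (induction t) auto
lemma open_nob: "nob t \<Longrightarrow> open_k k u t = t" by (induction t arbitrary: k) auto

lemma msubst_open: "(\<forall>x\<in>fev A. nob (\<theta> x)) \<Longrightarrow> msubst \<theta> (open_k k u A) = open_k k (msubst \<theta> u) (msubst \<theta> A)"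
  by (induction A arbitrary: k) (auto simp: open_nob)

lemma fev_open: "fev (open_k k u A) \<subseteq> fev A \<union> fev u" by (induction A arbitrary: k) auto

fun subt :: "ty \<Rightarrow> ty \<Rightarrow> bool" where
  "subt s (Arr A B) = (s = Arr A B \<or> subt s A \<or> subt s B)"
| "subt s (All A) = (s = All A \<or> subt s A)"
| "subt s A = (s = A)"

lemma subt_refl: "subt s s" by (cases s) auto

lemma subt_open: "nob s \<Longrightarrow> subt s A \<Longrightarrow> subt s (open_k k u A)"
proof (induction A arbitrary: k)
  case (Arr A1 A2)
  then show ?case using open_nob[of s k u] subt_refl by auto
next
  case (All A)
  then show ?case using open_nob[of s k u] subt_refl by auto
qed (auto simp: open_nob subt_refl)

lemma size_subt: "subt s A \<Longrightarrow> size s \<le> size A" by (induction A) auto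

lemma mono_eq: "decl_sub P X Y \<Longrightarrow> mono X \<Longrightarrow> mono Y \<Longrightarrow> X = Y"
  by (induction rule: decl_sub.induct) auto

lemma sub_transfer: "decl_sub P X Y \<Longrightarrow>
   (mono X \<longrightarrow> (\<forall>s. mono s \<longrightarrow> subt s Y \<longrightarrow> subt s X)) \<and> (mono Y \<longrightarrow> (\<forall>s. mono s \<longrightarrow> subt s X \<longrightarrow> subt s Y))"
proof (induction rule: decl_sub.induct)
  case (dsub_arr P B1 A1 A2 B2)
  show ?case
  proof (intro conjI impI allI)
    fix s assume m: "mono (Arr A1 A2)" "mono s" "subt s (Arr B1 B2)"
    show "subt s (Arr A1 A2)"
    proof (cases "s = Arr B1 B2")
      case True
      then have "Arr A1 A2 = Arr B1 B2" using mono_eq[OF decl_sub.dsub_arr[OF dsub_arr.hyps]] m by auto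
      then show ?thesis using True by simp
    qed (use m dsub_arr.IH in auto)
  next
    fix s assume m: "mono (Arr B1 B2)" "mono s" "subt s (Arr A1 A2)"
    show "subt s (Arr B1 B2)"
    proof (cases "s = Arr A1 A2")
      case True
      then have "Arr A1 A2 = Arr B1 B2" using mono_eq[OF decl_sub.dsub_arr[OF dsub_arr.hyps]] m by auto
      then show ?thesis using True by simp
    qed (use m dsub_arr.IH in auto)
  qed
next
  case (dsub_allL t P A B)
  show ?case
  proof (intro conjI impI allI)
    fix s assume m: "mono B" "mono s" "subt s (All A)"
    then have "subt s A" by auto
    then have "subt s (open_typ A t)" unfolding open_typ_def using subt_open mono_nob m(2) by blast
    then show "subt s B" using dsub_allL.IH m by auto
  qed simp
next
  case (dsub_allR b P A B)
  show ?case
  proof (intro conjI impI allI)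
    fix s assume m: "mono A" "mono s" "subt s (All B)"
    then have "subt s B" by auto
    then have "subt s (open_typ B (TVar b))" unfolding open_typ_def using subt_open mono_nob m(2) by blast
    then show "subt s A" using dsub_allR.IH m by auto
  qed simp
qed auto

lemma arr_invL: "decl_sub P X (Arr Y1 Y2) \<Longrightarrow> mono X \<Longrightarrow> \<exists>X1 X2. X = Arr X1 X2 \<and> decl_sub P Y1 X1 \<and> decl_sub P X2 Y2"
  by (erule decl_sub.cases) auto
lemma arr_invR: "decl_sub P (Arr Y1 Y2) X \<Longrightarrow> mono X \<Longrightarrow> \<exists>X1 X2. X = Arr X1 X2 \<and> decl_sub P X1 Y1 \<and> decl_sub P Y2 X2"
  by (erule decl_sub.cases) auto

lemma occurs_L: "decl_sub P X (Arr Y1 Y2) \<Longrightarrow> mono X \<Longrightarrow> subt X Y1 \<or> subt X Y2 \<Longrightarrow> False"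
proof -
  assume d: "decl_sub P X (Arr Y1 Y2)" and m: "mono X" and s: "subt X Y1 \<or> subt X Y2"
  obtain X1 X2 where x: "X = Arr X1 X2" "decl_sub P Y1 X1" "decl_sub P X2 Y2" using arr_invL[OF d m] by blast
  have "subt X X1 \<or> subt X X2"
    using sub_transfer[OF x(2)] sub_transfer[OF x(3)] m s x(1) by auto
  then show False using size_subt x(1) by fastforce
qed

lemma occurs_R: "decl_sub P (Arr Y1 Y2) X \<Longrightarrow> mono X \<Longrightarrow> subt X Y1 \<or> subt X Y2 \<Longrightarrow> False"
proof -
  assume d: "decl_sub P (Arr Y1 Y2) X" and m: "mono X" and s: "subt X Y1 \<or> subt X Y2"
  obtain X1 X2 where x: "X = Arr X1 X2" "decl_sub P X1 Y1" "decl_sub P Y2 X2" using arr_invR[OF d m] by blast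
  have "subt X X1 \<or> subt X X2"
    using sub_transfer[OF x(2)] sub_transfer[OF x(3)] m s x(1) by auto
  then show False using size_subt x(1) by fastforce
qed

lemma msubst_subt: "e \<in> fev A \<Longrightarrow> subt (\<theta> e) (msubst \<theta> A)"
  by (induction A) (auto simp: subt_refl)



definition invc :: "ctx \<Rightarrow> (nat \<Rightarrow> ty) \<Rightarrow> ctx \<Rightarrow> bool" where
  "invc G \<sigma> P \<longleftrightarrow> okc {} {} \<sigma> G \<and> tdom G = tdom P"

definition untouched :: "ctx \<Rightarrow> nat \<Rightarrow> ty \<Rightarrow> ctx \<Rightarrow> bool" where
  "untouched G a B D \<longleftrightarrow> (\<forall>e. CEVar e \<in> set G \<longrightarrow> e \<noteq> a \<longrightarrow> e \<notin> fev B \<longrightarrow>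
     CEVar e \<in> set D \<and> (\<forall>Y. appd G Y \<longrightarrow> e \<in> fev (applyc D Y) \<longrightarrow> e \<in> fev Y))"

definition goodout :: "ctx \<Rightarrow> (nat \<Rightarrow> ty) \<Rightarrow> ctx \<Rightarrow> ctx \<Rightarrow> (nat \<Rightarrow> ty) \<Rightarrow> bool" where
  "goodout G \<sigma> P D \<sigma>' \<longleftrightarrow> refines G D \<and> invc D \<sigma>' P \<and> extsem G \<sigma> D \<sigma>'"

lemma wft_of_mono: "mono t \<Longrightarrow> ftv t \<subseteq> tdom G \<Longrightarrow> fev t \<subseteq> edom G \<Longrightarrow> wft_k G k t"
  by (induction t) auto

lemma wft_ftv: "wft_k P k t \<Longrightarrow> ftv t \<subseteq> tdom P"
  by (induction t arbitrary: k) auto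

lemma fresh: "finite (S::nat set) \<Longrightarrow> \<exists>x. x \<notin> S"
  by (metis ex_new_if_finite infinite_UNIV_nat)

lemma msubst_inv_TVar: "msubst \<sigma> B = TVar c \<Longrightarrow> B = TVar c \<or> (\<exists>e. B = EVar e)"
  by (cases B) auto
lemma msubst_inv_TUnit: "msubst \<sigma> B = TUnit \<Longrightarrow> B = TUnit \<or> (\<exists>e. B = EVar e)"
  by (cases B) auto
lemma msubst_inv_Arr: "msubst \<sigma> B = Arr X1 X2 \<Longrightarrow>
   (\<exists>B1 B2. B = Arr B1 B2 \<and> msubst \<sigma> B1 = X1 \<and> msubst \<sigma> B2 = X2) \<or> (\<exists>e. B = EVar e)"
  by (cases B) auto
lemma msubst_inv_All: "msubst \<sigma> B = All X \<Longrightarrow> (\<exists>B'. B = All B' \<and> msubst \<sigma> B' = X) \<or> (\<exists>e. B = EVar e)"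
  by (cases B) auto

lemma appd_ev_mono: "invc G \<sigma> P \<Longrightarrow> appd G (EVar e) \<Longrightarrow> mono (\<sigma> e)"
  unfolding invc_def appd_def using okc_ev by force

lemma inst_solve:
  assumes iv: "invc G \<sigma> P" and G: "G = G0 @ CEVar a # G1" and m: "mono t" and fs: "fev t \<subseteq> edom G0"
    and ap: "appd G t" and eq: "msubst \<sigma> t = \<sigma> a"
  shows "\<exists>D. instL G a t D \<and> instR G t a D \<and> goodout G \<sigma> P D \<sigma> \<and> untouched G a t D"
proof -
  have ok: "okc {} {} \<sigma> G" and td: "tdom G = tdom P" using iv unfolding invc_def by auto
  note rs = replace_solve[OF ok G fs ap eq]
  note o = okc_split3[OF ok[unfolded G]]
  have "ftv t \<subseteq> tdom G0" using ftv_msubst[of t \<sigma>] eq o by auto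
  then have w: "wft G0 t" unfolding wft_def using wft_of_mono m fs by blast
  define D where "D = G0 @ CSolved a t # G1"
  have "instL G a t D" unfolding D_def G using instLSolve[of _ G0 a G1 t, OF _ m w] by simp
  moreover have "instR G t a D" unfolding D_def G using instRSolve[of _ G0 a G1 t, OF _ m w] by simp
  moreover have "goodout G \<sigma> P D \<sigma>" unfolding goodout_def invc_def D_def using rs td by auto
  moreover have "untouched G a t D" unfolding untouched_def D_def using rs by blast
  ultimately show ?thesis by blast
qed

lemma inst_evar:
  assumes iv: "invc G \<sigma> P" and a: "CEVar a \<in> set G" and e: "CEVar e \<in> set G" and ne: "e \<noteq> a"
    and eq: "\<sigma> e = \<sigma> a"
  shows "\<exists>D. instL G a (EVar e) D \<and> instR G (EVar e) a D \<and> goodout G \<sigma> P D \<sigma> \<and> untouched G a (EVar e) D"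
proof -
  have ok: "okc {} {} \<sigma> G" and td: "tdom G = tdom P" using iv unfolding invc_def by auto
  obtain G0 G1 where G: "G = G0 @ CEVar a # G1" using a by (meson split_list)
  show ?thesis
  proof (cases "e \<in> edom G0")
    case True
    show ?thesis
      by (rule inst_solve[OF iv G]) (use True e eq in \<open>auto simp: appd_def\<close>)
  next
    case False
    then have "CEVar e \<in> set G1" using e ne G in_edom(1)[of e G0] by auto
    then obtain G1a G1b where G1: "G1 = G1a @ CEVar e # G1b" by (meson split_list)
    define H0 where "H0 = G0 @ CEVar a # G1a"
    have G': "G = H0 @ CEVar e # G1b" unfolding G G1 H0_def by simp
    note rs = replace_solve[OF ok G', of "EVar a"]
    have rs': "refines G (H0 @ CSolved e (EVar a) # G1b) \<and> okc {} {} \<sigma> (H0 @ CSolved e (EVar a) # G1b) \<and>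
      tdom (H0 @ CSolved e (EVar a) # G1b) = tdom G \<and> extsem G \<sigma> (H0 @ CSolved e (EVar a) # G1b) \<sigma> \<and>
      (\<forall>ea. CEVar ea \<in> set G \<longrightarrow> ea \<noteq> e \<longrightarrow> CEVar ea \<in> set (H0 @ CSolved e (EVar a) # G1b)) \<and>
      (\<forall>Y. appd G Y \<longrightarrow> fev (applyc (H0 @ CSolved e (EVar a) # G1b) Y) \<subseteq> fev Y \<union> fev (EVar a))"
      by (rule rs) (use a eq in \<open>auto simp: H0_def appd_def\<close>)
    define D where "D = H0 @ CSolved e (EVar a) # G1b"
    have Gf: "G = G0 @ [CEVar a] @ G1a @ [CEVar e] @ G1b" unfolding G G1 by simp
    have Df: "D = G0 @ [CEVar a] @ G1a @ [CSolved e (EVar a)] @ G1b" unfolding D_def H0_def by simp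
    have "instL G a (EVar e) D" unfolding Df by (rule instLReach[OF Gf])
    moreover have "instR G (EVar e) a D" unfolding Df by (rule instRReach[OF Gf])
    moreover have "goodout G \<sigma> P D \<sigma>" unfolding goodout_def invc_def D_def using rs' td by auto
    moreover have "untouched G a (EVar e) D" unfolding untouched_def D_def using rs' by auto
    ultimately show ?thesis by blast
  qed
qed

lemma inst_atom:
  assumes iv: "invc G \<sigma> P" and a: "CEVar a \<in> set G" and na: "a \<notin> fev B" and ap: "appd G B"
    and eq: "msubst \<sigma> B = \<sigma> a" and B: "B = TUnit \<or> (\<exists>c. B = TVar c) \<or> (\<exists>e. B = EVar e)"
  shows "\<exists>D \<sigma>'. instL G a B D \<and> instR G B a D \<and> goodout G \<sigma> P D \<sigma>' \<and> untouched G a B D"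
proof (cases "\<exists>e. B = EVar e")
  case True
  then obtain e where e: "B = EVar e" by blast
  show ?thesis using inst_evar[OF iv a, of e] e na ap eq unfolding appd_def by auto
next
  case False
  obtain G0 G1 where G: "G = G0 @ CEVar a # G1" using a by (meson split_list)
  have "mono B" "fev B = {}" using B False by auto
  then show ?thesis using inst_solve[OF iv G, of B] ap eq by auto
qed

lemma untouched_comp:
  assumes okG': "okc {} {} \<sigma>' G'" and okT: "okc {} {} \<sigma>T T" and okD: "okc {} {} \<sigma>D D"
    and rGG': "refines G G'" and rG'T: "refines G' T" and rTD: "refines T D"
    and s1: "\<forall>e. CEVar e \<in> set G \<longrightarrow> e \<noteq> a \<longrightarrow> CEVar e \<in> set G'"
    and s2: "\<forall>Y. appd G Y \<longrightarrow> fev (applyc G' Y) \<subseteq> fev Y \<union> {a1, a2}"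
    and f1: "a1 \<notin> edom G" and f2: "a2 \<notin> edom G" and apC2: "appd G' C2"
    and uT: "untouched G' a1 C1 T" and uD: "untouched T a2 (applyc T C2) D"
  shows "untouched G a (Arr C1 C2) D"
  unfolding untouched_def
proof (intro allI impI)
  fix e assume e: "CEVar e \<in> set G" and ea: "e \<noteq> a" and eB: "e \<notin> fev (Arr C1 C2)"
  have e12: "e \<noteq> a1" "e \<noteq> a2" using in_edom(1)[OF e] f1 f2 by auto
  have eG': "CEVar e \<in> set G'" using s1 e ea by blast
  have uT': "CEVar e \<in> set T \<and> (\<forall>Y. appd G' Y \<longrightarrow> e \<in> fev (applyc T Y) \<longrightarrow> e \<in> fev Y)"
    using uT eG' e12 eB unfolding untouched_def by auto
  have "e \<notin> fev (applyc T C2)" using uT' apC2 eB by auto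
  then have uD': "CEVar e \<in> set D \<and> (\<forall>Y. appd T Y \<longrightarrow> e \<in> fev (applyc D Y) \<longrightarrow> e \<in> fev Y)"
    using uD uT' e12 unfolding untouched_def by auto
  have sub1: "edom G \<subseteq> edom G'" "edom G' \<subseteq> edom T" using refines_edom rGG' rG'T by auto
  have "\<forall>Y. appd G Y \<longrightarrow> e \<in> fev (applyc D Y) \<longrightarrow> e \<in> fev Y"
  proof (intro allI impI)
    fix Y assume Y: "appd G Y" "e \<in> fev (applyc D Y)"
    define Y1 where "Y1 = applyc G' Y"
    define Y2 where "Y2 = applyc T Y1"
    have a1: "appd G' Y1" unfolding Y1_def using appd_applyc[OF okG'] appd_edom[OF Y(1)] sub1 by blast
    have a2: "appd T Y2" unfolding Y2_def using appd_applyc[OF okT] appd_edom[OF a1] sub1 by blast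
    have rG'D: "refines G' D" using refines_trans[OF rG'T rTD] .
    have "applyc D Y2 = applyc D Y1" unfolding Y2_def
      by (rule applyc_idem[OF okD]) (use refines_solved[OF rTD] in blast)
    also have "\<dots> = applyc D Y" unfolding Y1_def
      by (rule applyc_idem[OF okD]) (use refines_solved[OF rG'D] in blast)
    finally have "e \<in> fev (applyc D Y2)" using Y(2) by simp
    then have "e \<in> fev Y2" using uD' a2 by blast
    then have "e \<in> fev Y1" using uT' a1 unfolding Y2_def by blast
    then show "e \<in> fev Y" using s2 Y(1) e12 unfolding Y1_def by blast
  qed
  then show "CEVar e \<in> set D \<and> (\<forall>Y. appd G Y \<longrightarrow> e \<in> fev (applyc D Y) \<longrightarrow> e \<in> fev Y)" using uD' by blast
qed



lemma fupd2: "a1 \<noteq> a2 \<Longrightarrow> (\<sigma>(a1 := t1, a2 := t2)) a1 = t1" "(\<sigma>(a1 := t1, a2 := t2)) a2 = t2" by auto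

lemma inst_complete:
  "decl_sub P X Y \<Longrightarrow>
   (\<forall>G \<sigma> a B. invc G \<sigma> P \<longrightarrow> CEVar a \<in> set G \<longrightarrow> a \<notin> fev B \<longrightarrow> appd G B \<longrightarrow> X = \<sigma> a \<longrightarrow> Y = msubst \<sigma> B \<longrightarrow>
      (\<exists>D \<sigma>'. instL G a B D \<and> goodout G \<sigma> P D \<sigma>' \<and> untouched G a B D)) \<and>
   (\<forall>G \<sigma> a B. invc G \<sigma> P \<longrightarrow> CEVar a \<in> set G \<longrightarrow> a \<notin> fev B \<longrightarrow> appd G B \<longrightarrow> X = msubst \<sigma> B \<longrightarrow> Y = \<sigma> a \<longrightarrow>
      (\<exists>D \<sigma>'. instR G B a D \<and> goodout G \<sigma> P D \<sigma>' \<and> untouched G a B D))"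
proof (induction rule: decl_sub.induct)
  case (dsub_var c P)
  show ?case
  proof (intro conjI allI impI)
    fix G \<sigma> a B assume h: "invc G \<sigma> P" "CEVar a \<in> set G" "a \<notin> fev B" "appd G B" "TVar c = \<sigma> a" "TVar c = msubst \<sigma> B"
    show "\<exists>D \<sigma>'. instL G a B D \<and> goodout G \<sigma> P D \<sigma>' \<and> untouched G a B D"
      using inst_atom[OF h(1-4)] msubst_inv_TVar[OF h(6)[symmetric]] h(5,6) by metis
  next
    fix G \<sigma> a B assume h: "invc G \<sigma> P" "CEVar a \<in> set G" "a \<notin> fev B" "appd G B" "TVar c = msubst \<sigma> B" "TVar c = \<sigma> a"
    show "\<exists>D \<sigma>'. instR G B a D \<and> goodout G \<sigma> P D \<sigma>' \<and> untouched G a B D"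
      using inst_atom[OF h(1-4)] msubst_inv_TVar[OF h(5)[symmetric]] h(5,6) by metis
  qed
next
  case (dsub_unit P)
  show ?case
  proof (intro conjI allI impI)
    fix G \<sigma> a B assume h: "invc G \<sigma> P" "CEVar a \<in> set G" "a \<notin> fev B" "appd G B" "TUnit = \<sigma> a" "TUnit = msubst \<sigma> B"
    show "\<exists>D \<sigma>'. instL G a B D \<and> goodout G \<sigma> P D \<sigma>' \<and> untouched G a B D"
      using inst_atom[OF h(1-4)] msubst_inv_TUnit[OF h(6)[symmetric]] h(5,6) by metis
  next
    fix G \<sigma> a B assume h: "invc G \<sigma> P" "CEVar a \<in> set G" "a \<notin> fev B" "appd G B" "TUnit = msubst \<sigma> B" "TUnit = \<sigma> a"
    show "\<exists>D \<sigma>'. instR G B a D \<and> goodout G \<sigma> P D \<sigma>' \<and> untouched G a B D"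
      using inst_atom[OF h(1-4)] msubst_inv_TUnit[OF h(5)[symmetric]] h(5,6) by metis
  qed
next
  case (dsub_arr P B1 A1 A2 B2)
  have der: "decl_sub P (Arr A1 A2) (Arr B1 B2)" using dsub_arr.hyps by (rule decl_sub.dsub_arr)
  note IH1L = dsub_arr.IH(1)[THEN conjunct1, rule_format]
  note IH1R = dsub_arr.IH(1)[THEN conjunct2, rule_format]
  note IH2L = dsub_arr.IH(2)[THEN conjunct1, rule_format]
  note IH2R = dsub_arr.IH(2)[THEN conjunct2, rule_format]
  show ?case
  proof (intro conjI allI impI)
    fix G \<sigma> a B assume h: "invc G \<sigma> P" "CEVar a \<in> set G" "a \<notin> fev B" "appd G B" "Arr A1 A2 = \<sigma> a" "Arr B1 B2 = msubst \<sigma> B"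
    have ok: "okc {} {} \<sigma> G" and td: "tdom G = tdom P" using h(1) unfolding invc_def by auto
    show "\<exists>D \<sigma>'. instL G a B D \<and> goodout G \<sigma> P D \<sigma>' \<and> untouched G a B D"
    proof (cases "\<exists>e. B = EVar e")
      case True
      then obtain e where e: "B = EVar e" by blast
      have eG: "CEVar e \<in> set G" "e \<noteq> a" using h(3,4) e unfolding appd_def by auto
      have "mono (\<sigma> a)" "mono (\<sigma> e)" using okc_ev[OF ok] h(2) eG by auto
      then have "\<sigma> e = \<sigma> a" using mono_eq[OF der] h(5,6) e by simp
      then show ?thesis using inst_evar[OF h(1,2) eG(1,2)] e by blast
    next
      case False
      then obtain C1 C2 where C: "B = Arr C1 C2" "msubst \<sigma> C1 = B1" "msubst \<sigma> C2 = B2"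
        using msubst_inv_Arr[OF h(6)[symmetric]] by blast
      obtain G0 G1 where G: "G = G0 @ CEVar a # G1" using h(2) by (meson split_list)
      obtain a1 where a1: "a1 \<notin> edom G \<union> mdom G \<union> fev B" using fresh by (meson finite_UnI finite_edom finite_fev finite_mdom)
      obtain a2 where a2: "a2 \<notin> edom G \<union> mdom G \<union> fev B \<union> {a1}" using fresh
        by (meson finite_UnI finite_edom finite_fev finite_mdom finite.emptyI finite_insert)
      define G' where "G' = G0 @ [CEVar a2, CEVar a1, CSolved a (Arr (EVar a1) (EVar a2))] @ G1"
      define \<sigma>' where "\<sigma>' = \<sigma>(a1 := A1, a2 := A2)"
      have ne: "a1 \<noteq> a2" using a2 by auto
      have sp: "refines G G' \<and> okc {} {} \<sigma>' G' \<and> tdom G' = tdom G \<and> extsem G \<sigma> G' \<sigma>'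
        \<and> (\<forall>e. CEVar e \<in> set G \<longrightarrow> e \<noteq> a \<longrightarrow> CEVar e \<in> set G')
        \<and> (\<forall>Y. appd G Y \<longrightarrow> fev (applyc G' Y) \<subseteq> fev Y \<union> {a1, a2})
        \<and> CEVar a1 \<in> set G' \<and> CEVar a2 \<in> set G' \<and> edom G' = edom G \<union> {a1, a2}"
        unfolding G'_def \<sigma>'_def by (rule replace_split[OF ok G h(5)[symmetric]]) (use a1 a2 in auto)
      have okG': "okc {} {} \<sigma>' G'" and ivG': "invc G' \<sigma>' P" using sp td unfolding invc_def by auto
      have apC: "appd G' C1" "appd G' C2" using h(3,4) sp C(1) unfolding appd_def by auto
      have sC1: "msubst \<sigma>' C1 = B1" using C a1 a2 unfolding \<sigma>'_def by (auto intro!: msubst_cong)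
      have s1: "\<sigma>' a1 = A1" using ne unfolding \<sigma>'_def by simp
      have a1G: "CEVar a1 \<in> set G'" and a1C: "a1 \<notin> fev C1" "appd G' C1" using sp a1 C(1) apC by auto
      have sC2: "msubst \<sigma>' C2 = B2" using C a1 a2 unfolding \<sigma>'_def by (auto intro!: msubst_cong)
      obtain T \<sigma>T where T: "instR G' C1 a1 T" "goodout G' \<sigma>' P T \<sigma>T" "untouched G' a1 C1 T"
        using IH1R[OF ivG' a1G a1C sC1[symmetric] s1[symmetric]] by blast
      have rT: "refines G' T" and okT: "okc {} {} \<sigma>T T" and ivT: "invc T \<sigma>T P" and exT: "extsem G' \<sigma>' T \<sigma>T"
        using T(2) unfolding goodout_def invc_def by auto
      have uT: "CEVar a2 \<in> set T \<and> (\<forall>Y. appd G' Y \<longrightarrow> a2 \<in> fev (applyc T Y) \<longrightarrow> a2 \<in> fev Y)"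
        using T(3) sp ne a2 C(1) unfolding untouched_def by auto
      have a2n: "a2 \<notin> fev (applyc T C2)" using uT apC(2) a2 C(1) by auto
      have edT: "edom G' \<subseteq> edom T" by (rule refines_edom[OF rT])
      have apT: "appd T (applyc T C2)" using appd_applyc[OF okT] appd_edom[OF apC(2)] edT by blast
      have "msubst \<sigma>T (applyc T (EVar a2)) = msubst \<sigma>' (applyc G' (EVar a2))"
        using exT sp unfolding extsem_def by auto
      then have sa2: "\<sigma>T a2 = A2" using applyc_unsolved[OF okT] applyc_unsolved[OF okG'] uT sp
        fupd2(1)[OF ne] fupd2(2) unfolding \<sigma>'_def by auto
      have "msubst \<sigma>T (applyc T C2) = msubst \<sigma>' (applyc G' C2)"
        using exT appd_edom[OF apC(2)] unfolding extsem_def by auto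
      then have sT2: "msubst \<sigma>T (applyc T C2) = B2" using appd_id[OF okG' apC(2)] sC2 by simp
      obtain D \<sigma>D where Dd: "instL T a2 (applyc T C2) D" "goodout T \<sigma>T P D \<sigma>D" "untouched T a2 (applyc T C2) D"
        using IH2L[OF ivT uT[THEN conjunct1] a2n apT sa2[symmetric] sT2[symmetric]] by blast
      have rD: "refines T D" and okD: "okc {} {} \<sigma>D D" and exD: "extsem T \<sigma>T D \<sigma>D"
        using Dd(2) unfolding goodout_def invc_def by auto
      have "instL G a (Arr C1 C2) D"
        by (rule instLArr[of G G0 a G1 a1 C1 C2 a2 T D]) (use G a1 a2 ne C(1) T(1) Dd(1) in \<open>auto simp: G'_def\<close>)
      moreover have "goodout G \<sigma> P D \<sigma>D"
        unfolding goodout_def using Dd(2) refines_trans[OF sp[THEN conjunct1] refines_trans[OF rT rD]]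
          extsem_trans[OF sp[THEN conjunct1] _ extsem_trans[OF rT exT exD]] sp unfolding goodout_def by auto
      moreover have "untouched G a (Arr C1 C2) D"
        by (rule untouched_comp[OF okG' okT okD _ rT rD _ _ _ _ apC(2) T(3) Dd(3)]) (use sp a1 a2 in auto)
      ultimately show ?thesis using C(1) by blast
    qed
  next
    fix G \<sigma> a B assume h: "invc G \<sigma> P" "CEVar a \<in> set G" "a \<notin> fev B" "appd G B" "Arr A1 A2 = msubst \<sigma> B" "Arr B1 B2 = \<sigma> a"
    have ok: "okc {} {} \<sigma> G" and td: "tdom G = tdom P" using h(1) unfolding invc_def by auto
    show "\<exists>D \<sigma>'. instR G B a D \<and> goodout G \<sigma> P D \<sigma>' \<and> untouched G a B D"
    proof (cases "\<exists>e. B = EVar e")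
      case True
      then obtain e where e: "B = EVar e" by blast
      have eG: "CEVar e \<in> set G" "e \<noteq> a" using h(3,4) e unfolding appd_def by auto
      have "mono (\<sigma> a)" "mono (\<sigma> e)" using okc_ev[OF ok] h(2) eG by auto
      then have "\<sigma> e = \<sigma> a" using mono_eq[OF der] h(5,6) e by simp
      then show ?thesis using inst_evar[OF h(1,2) eG(1,2)] e by blast
    next
      case False
      then obtain C1 C2 where C: "B = Arr C1 C2" "msubst \<sigma> C1 = A1" "msubst \<sigma> C2 = A2"
        using msubst_inv_Arr[OF h(5)[symmetric]] by blast
      obtain G0 G1 where G: "G = G0 @ CEVar a # G1" using h(2) by (meson split_list)
      obtain a1 where a1: "a1 \<notin> edom G \<union> mdom G \<union> fev B" using fresh by (meson finite_UnI finite_edom finite_fev finite_mdom)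
      obtain a2 where a2: "a2 \<notin> edom G \<union> mdom G \<union> fev B \<union> {a1}" using fresh
        by (meson finite_UnI finite_edom finite_fev finite_mdom finite.emptyI finite_insert)
      define G' where "G' = G0 @ [CEVar a2, CEVar a1, CSolved a (Arr (EVar a1) (EVar a2))] @ G1"
      define \<sigma>' where "\<sigma>' = \<sigma>(a1 := B1, a2 := B2)"
      have ne: "a1 \<noteq> a2" using a2 by auto
      have sp: "refines G G' \<and> okc {} {} \<sigma>' G' \<and> tdom G' = tdom G \<and> extsem G \<sigma> G' \<sigma>'
        \<and> (\<forall>e. CEVar e \<in> set G \<longrightarrow> e \<noteq> a \<longrightarrow> CEVar e \<in> set G')
        \<and> (\<forall>Y. appd G Y \<longrightarrow> fev (applyc G' Y) \<subseteq> fev Y \<union> {a1, a2})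
        \<and> CEVar a1 \<in> set G' \<and> CEVar a2 \<in> set G' \<and> edom G' = edom G \<union> {a1, a2}"
        unfolding G'_def \<sigma>'_def by (rule replace_split[OF ok G h(6)[symmetric]]) (use a1 a2 in auto)
      have okG': "okc {} {} \<sigma>' G'" and ivG': "invc G' \<sigma>' P" using sp td unfolding invc_def by auto
      have apC: "appd G' C1" "appd G' C2" using h(3,4) sp C(1) unfolding appd_def by auto
      have sC1: "msubst \<sigma>' C1 = A1" using C a1 a2 unfolding \<sigma>'_def by (auto intro!: msubst_cong)
      have s1: "\<sigma>' a1 = B1" using ne unfolding \<sigma>'_def by simp
      have a1G: "CEVar a1 \<in> set G'" and a1C: "a1 \<notin> fev C1" "appd G' C1" using sp a1 C(1) apC by auto
      have sC2: "msubst \<sigma>' C2 = A2" using C a1 a2 unfolding \<sigma>'_def by (auto intro!: msubst_cong)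
      obtain T \<sigma>T where T: "instL G' a1 C1 T" "goodout G' \<sigma>' P T \<sigma>T" "untouched G' a1 C1 T"
        using IH1L[OF ivG' a1G a1C s1[symmetric] sC1[symmetric]] by blast
      have rT: "refines G' T" and okT: "okc {} {} \<sigma>T T" and ivT: "invc T \<sigma>T P" and exT: "extsem G' \<sigma>' T \<sigma>T"
        using T(2) unfolding goodout_def invc_def by auto
      have uT: "CEVar a2 \<in> set T \<and> (\<forall>Y. appd G' Y \<longrightarrow> a2 \<in> fev (applyc T Y) \<longrightarrow> a2 \<in> fev Y)"
        using T(3) sp ne a2 C(1) unfolding untouched_def by auto
      have a2n: "a2 \<notin> fev (applyc T C2)" using uT apC(2) a2 C(1) by auto
      have edT: "edom G' \<subseteq> edom T" by (rule refines_edom[OF rT])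
      have apT: "appd T (applyc T C2)" using appd_applyc[OF okT] appd_edom[OF apC(2)] edT by blast
      have "msubst \<sigma>T (applyc T (EVar a2)) = msubst \<sigma>' (applyc G' (EVar a2))"
        using exT sp unfolding extsem_def by auto
      then have sa2: "\<sigma>T a2 = B2" using applyc_unsolved[OF okT] applyc_unsolved[OF okG'] uT sp
        fupd2(1)[OF ne] fupd2(2) unfolding \<sigma>'_def by auto
      have "msubst \<sigma>T (applyc T C2) = msubst \<sigma>' (applyc G' C2)"
        using exT appd_edom[OF apC(2)] unfolding extsem_def by auto
      then have sT2: "msubst \<sigma>T (applyc T C2) = A2" using appd_id[OF okG' apC(2)] sC2 by simp
      obtain D \<sigma>D where Dd: "instR T (applyc T C2) a2 D" "goodout T \<sigma>T P D \<sigma>D" "untouched T a2 (applyc T C2) D"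
        using IH2R[OF ivT uT[THEN conjunct1] a2n apT sT2[symmetric] sa2[symmetric]] by blast
      have rD: "refines T D" and okD: "okc {} {} \<sigma>D D" and exD: "extsem T \<sigma>T D \<sigma>D"
        using Dd(2) unfolding goodout_def invc_def by auto
      have "instR G (Arr C1 C2) a D"
        by (rule instRArr[of G G0 a G1 a1 C1 C2 a2 T D]) (use G a1 a2 ne C(1) T(1) Dd(1) in \<open>auto simp: G'_def\<close>)
      moreover have "goodout G \<sigma> P D \<sigma>D"
        unfolding goodout_def using Dd(2) refines_trans[OF sp[THEN conjunct1] refines_trans[OF rT rD]]
          extsem_trans[OF sp[THEN conjunct1] _ extsem_trans[OF rT exT exD]] sp unfolding goodout_def by auto
      moreover have "untouched G a (Arr C1 C2) D"
        by (rule untouched_comp[OF okG' okT okD _ rT rD _ _ _ _ apC(2) T(3) Dd(3)]) (use sp a1 a2 in auto)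
      ultimately show ?thesis using C(1) by blast
    qed
  qed
next
  case (dsub_allL t P A B)
  note IHR = dsub_allL.IH[THEN conjunct2, rule_format]
  show ?case
  proof (intro conjI allI impI)
    fix G \<sigma> a B0 assume h: "invc G \<sigma> P" "CEVar a \<in> set G" "All A = \<sigma> a"
    have "mono (\<sigma> a)" using okc_ev h unfolding invc_def by blast
    then show "\<exists>D \<sigma>'. instL G a B0 D \<and> goodout G \<sigma> P D \<sigma>' \<and> untouched G a B0 D" using h(3) by (metis mono.simps(5))
  next
    fix G \<sigma> a B0 assume h: "invc G \<sigma> P" "CEVar a \<in> set G" "a \<notin> fev B0" "appd G B0" "All A = msubst \<sigma> B0" "B = \<sigma> a"
    have ok: "okc {} {} \<sigma> G" and td: "tdom G = tdom P" using h(1) unfolding invc_def by auto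
    obtain B' where B': "B0 = All B'" "msubst \<sigma> B' = A"
    proof -
      from msubst_inv_All[OF h(5)[symmetric]] show ?thesis
      proof
        assume "\<exists>e. B0 = EVar e"
        then obtain e where e: "B0 = EVar e" by blast
        then have "mono (\<sigma> e)" using appd_ev_mono[OF h(1)] h(4) by simp
        then show ?thesis using h(5) e by (metis mono.simps(5) msubst.simps(1))
      qed (use that in blast)
    qed
    obtain b where b: "b \<notin> edom G \<union> mdom G \<union> fev B' \<union> {a}" using fresh
      by (meson finite_UnI finite_edom finite_fev finite_mdom finite.emptyI finite_insert)
    define G' where "G' = G @ [CMarker b, CEVar b]"
    define \<sigma>' where "\<sigma>' = \<sigma>(b := t)"
    have tf: "fev t = {}" using dsub_allL.hyps(2) unfolding decl_typ_def .
    have tt: "ftv t \<subseteq> tdom G" using wft_ftv dsub_allL.hyps(3) td unfolding wft_def by blast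
    have sg: "\<forall>x. CEVar x \<in> set G \<longrightarrow> \<sigma>' x = \<sigma> x" using b in_edom(1) unfolding \<sigma>'_def by fastforce
    have okG0: "okc {} {} \<sigma>' G" using okc_cong[OF ok sg] .
    have sb: "\<sigma>' b = t" unfolding \<sigma>'_def by simp
    have okG': "okc {} {} \<sigma>' G'" unfolding G'_def okc_append
      using okG0 sb b dsub_allL.hyps(1) tf tt by auto
    have ivG': "invc G' \<sigma>' P" using okG' td unfolding invc_def G'_def by simp
    have aG': "CEVar a \<in> set G'" using h(2) unfolding G'_def by simp
    have afv: "a \<notin> fev (open_k 0 (EVar b) B')" using fev_open[of 0 "EVar b" B'] h(3) B'(1) b by auto
    have apO: "appd G' (open_k 0 (EVar b) B')" using fev_open[of 0 "EVar b" B'] h(4) B'(1)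
      unfolding appd_def G'_def by auto
    have nb: "\<forall>x\<in>fev B'. nob (\<sigma>' x)"
    proof
      fix x assume x: "x \<in> fev B'"
      then have "CEVar x \<in> set G" using h(4) B'(1) unfolding appd_def by auto
      then show "nob (\<sigma>' x)" using okc_ev[OF ok] sg mono_nob by metis
    qed
    have "msubst \<sigma>' (open_k 0 (EVar b) B') = open_k 0 t (msubst \<sigma>' B')"
      using msubst_open[OF nb, of 0 "EVar b"] sb by simp
    also have "msubst \<sigma>' B' = msubst \<sigma> B'" using b unfolding \<sigma>'_def by (auto intro!: msubst_cong)
    finally have sO: "open_typ A t = msubst \<sigma>' (open_k 0 (EVar b) B')" using B'(2) unfolding open_typ_def by simp
    have sa: "B = \<sigma>' a" using h(6) b unfolding \<sigma>'_def by auto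
    obtain D0 \<sigma>'' where D0: "instR G' (open_k 0 (EVar b) B') a D0" "goodout G' \<sigma>' P D0 \<sigma>''"
      "untouched G' a (open_k 0 (EVar b) B') D0"
      using IHR[OF ivG' aG' afv apO sO sa] by blast
    have r0: "refines G' D0" and ok0: "okc {} {} \<sigma>'' D0" and ex0: "extsem G' \<sigma>' D0 \<sigma>''"
      using D0(2) unfolding goodout_def invc_def by auto
    obtain D T where D: "D0 = D @ [CMarker b] @ T" "refines G D" "okc {} {} \<sigma>'' D" "extsem G \<sigma> D \<sigma>''"
      "\<forall>e. CEVar e \<in> set D0 \<longrightarrow> e \<in> edom G \<longrightarrow> CEVar e \<in> set D"
      "\<forall>Y. fev Y \<subseteq> edom G \<longrightarrow> applyc D0 Y = applyc D Y"
      using trunc_marker[OF r0[unfolded G'_def] ok0 ex0[unfolded G'_def] ok] b unfolding \<sigma>'_def by auto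
    have "instR G (All B') a D"
      by (rule instRAllL[of a G b B' D T]) (use h(2) b D0(1) D(1) in \<open>auto simp: G'_def open_typ_def\<close>)
    moreover have "goodout G \<sigma> P D \<sigma>''" unfolding goodout_def invc_def
      using D refines_tdom[OF D(2)] td by auto
    moreover have "untouched G a (All B') D" unfolding untouched_def
    proof (intro allI impI)
      fix e assume e: "CEVar e \<in> set G" "e \<noteq> a" "e \<notin> fev (All B')"
      have eb: "e \<noteq> b" using b in_edom(1)[OF e(1)] by auto
      have eG': "CEVar e \<in> set G'" using e(1) unfolding G'_def by simp
      have "e \<notin> fev (open_k 0 (EVar b) B')" using fev_open[of 0 "EVar b" B'] e(3) eb by auto
      then have u: "CEVar e \<in> set D0 \<and> (\<forall>Y. appd G' Y \<longrightarrow> e \<in> fev (applyc D0 Y) \<longrightarrow> e \<in> fev Y)"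
        using D0(3) eG' e(2) unfolding untouched_def by blast
      show "CEVar e \<in> set D \<and> (\<forall>Y. appd G Y \<longrightarrow> e \<in> fev (applyc D Y) \<longrightarrow> e \<in> fev Y)"
      proof (intro conjI allI impI)
        show "CEVar e \<in> set D" using D(5) u in_edom(1)[OF e(1)] by blast
      next
        fix Y assume Y: "appd G Y" "e \<in> fev (applyc D Y)"
        have "appd G' Y" using Y(1) unfolding appd_def G'_def by auto
        moreover have "applyc D0 Y = applyc D Y" using D(6) appd_edom[OF Y(1)] by blast
        ultimately show "e \<in> fev Y" using u Y(2) by auto
      qed
    qed
    ultimately show "\<exists>D \<sigma>'. instR G B0 a D \<and> goodout G \<sigma> P D \<sigma>' \<and> untouched G a B0 D" using B'(1) by blast
  qed
next
  case (dsub_allR b P A B)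
  note IHL = dsub_allR.IH[THEN conjunct1, rule_format]
  show ?case
  proof (intro conjI allI impI)
    fix G \<sigma> a B0 assume h: "invc G \<sigma> P" "CEVar a \<in> set G" "a \<notin> fev B0" "appd G B0" "A = \<sigma> a" "All B = msubst \<sigma> B0"
    have ok: "okc {} {} \<sigma> G" and td: "tdom G = tdom P" using h(1) unfolding invc_def by auto
    obtain B' where B': "B0 = All B'" "msubst \<sigma> B' = B"
    proof -
      from msubst_inv_All[OF h(6)[symmetric]] show ?thesis
      proof
        assume "\<exists>e. B0 = EVar e"
        then obtain e where e: "B0 = EVar e" by blast
        then have "mono (\<sigma> e)" using appd_ev_mono[OF h(1)] h(4) by simp
        then show ?thesis using h(6) e by (metis mono.simps(5) msubst.simps(1))
      qed (use that in blast)
    qed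
    define G' where "G' = G @ [CTVar b]"
    have okG': "okc {} {} \<sigma> G'" unfolding G'_def okc_append using ok by simp
    have ivG': "invc G' \<sigma> (P @ [CTVar b])" using okG' td unfolding invc_def G'_def by simp
    have aG': "CEVar a \<in> set G'" using h(2) unfolding G'_def by simp
    have afv: "a \<notin> fev (open_k 0 (TVar b) B')" using fev_open[of 0 "TVar b" B'] h(3) B'(1) by auto
    have apO: "appd G' (open_k 0 (TVar b) B')" using fev_open[of 0 "TVar b" B'] h(4) B'(1)
      unfolding appd_def G'_def by auto
    have nb: "\<forall>x\<in>fev B'. nob (\<sigma> x)"
    proof
      fix x assume x: "x \<in> fev B'"
      then have "CEVar x \<in> set G" using h(4) B'(1) unfolding appd_def by auto
      then show "nob (\<sigma> x)" using okc_ev[OF ok] mono_nob by metis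
    qed
    have sO: "open_typ B (TVar b) = msubst \<sigma> (open_k 0 (TVar b) B')"
      using msubst_open[OF nb] B'(2) unfolding open_typ_def by simp
    obtain D0 \<sigma>'' where D0: "instL G' a (open_k 0 (TVar b) B') D0" "goodout G' \<sigma> (P @ [CTVar b]) D0 \<sigma>''"
      "untouched G' a (open_k 0 (TVar b) B') D0"
      using IHL[OF ivG' aG' afv apO h(5) sO] by blast
    have r0: "refines G' D0" and ok0: "okc {} {} \<sigma>'' D0" and ex0: "extsem G' \<sigma> D0 \<sigma>''"
      using D0(2) unfolding goodout_def invc_def by auto
    obtain D where D: "D0 = D @ [CTVar b]" "refines G D" "okc {} {} \<sigma>'' D" "extsem G \<sigma> D \<sigma>''"
      "\<forall>e. CEVar e \<in> set D0 \<longrightarrow> CEVar e \<in> set D" "\<forall>Y. applyc D0 Y = applyc D Y"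
      using trunc_tvar[OF r0[unfolded G'_def] ok0 ex0[unfolded G'_def]] by blast
    have bG: "b \<notin> tdom G" using dsub_allR.hyps(1) td by simp
    have bB: "b \<notin> ftv B'" using dsub_allR.hyps(3) ftv_msubst[of B' \<sigma>] B'(2) by auto
    have "instL G a (All B') D"
      by (rule instLAllR[of a G b B' D "[]"]) (use h(2) bG bB D0(1) D(1) in \<open>auto simp: G'_def open_typ_def\<close>)
    moreover have "goodout G \<sigma> P D \<sigma>''" unfolding goodout_def invc_def
      using D refines_tdom[OF D(2)] td by auto
    moreover have "untouched G a (All B') D" unfolding untouched_def
    proof (intro allI impI)
      fix e assume e: "CEVar e \<in> set G" "e \<noteq> a" "e \<notin> fev (All B')"
      have eG': "CEVar e \<in> set G'" using e(1) unfolding G'_def by simp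
      have "e \<notin> fev (open_k 0 (TVar b) B')" using fev_open[of 0 "TVar b" B'] e(3) by auto
      then have u: "CEVar e \<in> set D0 \<and> (\<forall>Y. appd G' Y \<longrightarrow> e \<in> fev (applyc D0 Y) \<longrightarrow> e \<in> fev Y)"
        using D0(3) eG' e(2) unfolding untouched_def by blast
      show "CEVar e \<in> set D \<and> (\<forall>Y. appd G Y \<longrightarrow> e \<in> fev (applyc D Y) \<longrightarrow> e \<in> fev Y)"
      proof (intro conjI allI impI)
        show "CEVar e \<in> set D" using D(5) u by blast
      next
        fix Y assume Y: "appd G Y" "e \<in> fev (applyc D Y)"
        have "appd G' Y" using Y(1) unfolding appd_def G'_def by auto
        then show "e \<in> fev Y" using u Y(2) D(6) by auto
      qed
    qed
    ultimately show "\<exists>D \<sigma>'. instL G a B0 D \<and> goodout G \<sigma> P D \<sigma>' \<and> untouched G a B0 D" using B'(1) by blast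
  next
    fix G \<sigma> a B0 assume h: "invc G \<sigma> P" "CEVar a \<in> set G" "All B = \<sigma> a"
    have "mono (\<sigma> a)" using okc_ev h unfolding invc_def by blast
    then show "\<exists>D \<sigma>'. instR G B0 a D \<and> goodout G \<sigma> P D \<sigma>' \<and> untouched G a B0 D" using h(3) by (metis mono.simps(5))
  qed
qed



lemma goodout_refl: "invc G \<sigma> P \<Longrightarrow> goodout G \<sigma> P G \<sigma>"
  unfolding goodout_def extsem_def using refines_refl by auto

lemma tdom_CTVar: "c \<in> tdom G \<Longrightarrow> CTVar c \<in> set G"
proof -
  assume "c \<in> tdom G"
  then obtain x where x: "x \<in> set G" "c \<in> tdom_e x" unfolding tdom_def by blast
  have "x = CTVar c" using x(2) by (cases x rule: entry.exhaust) auto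
  then show ?thesis using x by simp
qed

lemma sub_evarL:
  assumes iv: "invc G \<sigma> P" and ap: "appd G (EVar e)" "appd G B" and d: "decl_sub P (\<sigma> e) (msubst \<sigma> B)"
    and c: "B = EVar e \<or> e \<notin> fev B"
  shows "\<exists>D \<sigma>'. alg_sub G (EVar e) B D \<and> goodout G \<sigma> P D \<sigma>'"
proof -
  have e: "CEVar e \<in> set G" using ap(1) unfolding appd_def by simp
  show ?thesis
  proof (cases "B = EVar e")
    case True then show ?thesis using asub_evar[OF e] goodout_refl[OF iv] by blast
  next
    case False
    then have n: "e \<notin> fev B" using c by blast
    obtain D \<sigma>' where "instL G e B D" "goodout G \<sigma> P D \<sigma>'"
      using inst_complete[OF d, THEN conjunct1, rule_format, OF iv e n ap(2) refl refl] by blast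
    then show ?thesis using asub_instL[OF e n] by blast
  qed
qed

lemma sub_evarR:
  assumes iv: "invc G \<sigma> P" and ap: "appd G (EVar e)" "appd G A" and d: "decl_sub P (msubst \<sigma> A) (\<sigma> e)"
    and c: "e \<notin> fev A"
  shows "\<exists>D \<sigma>'. alg_sub G A (EVar e) D \<and> goodout G \<sigma> P D \<sigma>'"
proof -
  have e: "CEVar e \<in> set G" using ap(1) unfolding appd_def by simp
  obtain D \<sigma>' where "instR G A e D" "goodout G \<sigma> P D \<sigma>'"
    using inst_complete[OF d, THEN conjunct2, rule_format, OF iv e c ap(2) refl refl] by blast
  then show ?thesis using asub_instR[OF e c] by blast
qed

lemma sub_complete:
  "decl_sub P X Y \<Longrightarrow> \<forall>G \<sigma> A B. invc G \<sigma> P \<longrightarrow> appd G A \<longrightarrow> appd G B \<longrightarrow> X = msubst \<sigma> A \<longrightarrow> Y = msubst \<sigma> B \<longrightarrow>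
     (\<exists>D \<sigma>'. alg_sub G A B D \<and> goodout G \<sigma> P D \<sigma>')"
proof (induction rule: decl_sub.induct)
  case (dsub_var c P)
  have der: "decl_sub P (TVar c) (TVar c)" using dsub_var by (rule decl_sub.dsub_var)
  show ?case
  proof (intro allI impI)
    fix G \<sigma> A B assume h: "invc G \<sigma> P" "appd G A" "appd G B" "TVar c = msubst \<sigma> A" "TVar c = msubst \<sigma> B"
    have A: "A = TVar c \<or> (\<exists>e. A = EVar e)" using msubst_inv_TVar[OF h(4)[symmetric]] .
    have B: "B = TVar c \<or> (\<exists>e. B = EVar e)" using msubst_inv_TVar[OF h(5)[symmetric]] .
    have dd: "decl_sub P (msubst \<sigma> A) (msubst \<sigma> B)" using der unfolding h(4)[symmetric] h(5)[symmetric] .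
    show "\<exists>D \<sigma>'. alg_sub G A B D \<and> goodout G \<sigma> P D \<sigma>'"
    proof (cases "A = TVar c")
      case True
      show ?thesis
      proof (cases "B = TVar c")
        case True
        have "CTVar c \<in> set G" using dsub_var h(1) tdom_CTVar unfolding invc_def by auto
        then show ?thesis using asub_var goodout_refl[OF h(1)] True \<open>A = TVar c\<close> by blast
      next
        case False
        then obtain e where e: "B = EVar e" using B by blast
        have "decl_sub P (msubst \<sigma> A) (\<sigma> e)" using dd unfolding e by simp
        moreover have "e \<notin> fev A" using True by simp
        ultimately show ?thesis using sub_evarR[OF h(1) h(3)[unfolded e] h(2)] e by blast
      qed
    next
      case False
      then obtain e where e: "A = EVar e" using A by blast
      have "B = EVar e \<or> e \<notin> fev B" using B by auto
      moreover have "decl_sub P (\<sigma> e) (msubst \<sigma> B)" using dd unfolding e by simp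
      ultimately show ?thesis using sub_evarL[OF h(1) h(2)[unfolded e] h(3)] e by blast
    qed
  qed
next
  case (dsub_unit P)
  have der: "decl_sub P TUnit TUnit" by (rule decl_sub.dsub_unit)
  show ?case
  proof (intro allI impI)
    fix G \<sigma> A B assume h: "invc G \<sigma> P" "appd G A" "appd G B" "TUnit = msubst \<sigma> A" "TUnit = msubst \<sigma> B"
    have A: "A = TUnit \<or> (\<exists>e. A = EVar e)" using msubst_inv_TUnit[OF h(4)[symmetric]] .
    have B: "B = TUnit \<or> (\<exists>e. B = EVar e)" using msubst_inv_TUnit[OF h(5)[symmetric]] .
    have dd: "decl_sub P (msubst \<sigma> A) (msubst \<sigma> B)" using der unfolding h(4)[symmetric] h(5)[symmetric] .
    show "\<exists>D \<sigma>'. alg_sub G A B D \<and> goodout G \<sigma> P D \<sigma>'"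
    proof (cases "A = TUnit")
      case True
      show ?thesis
      proof (cases "B = TUnit")
        case True
        then show ?thesis using asub_unit goodout_refl[OF h(1)] \<open>A = TUnit\<close> by blast
      next
        case False
        then obtain e where e: "B = EVar e" using B by blast
        have "decl_sub P (msubst \<sigma> A) (\<sigma> e)" using dd unfolding e by simp
        moreover have "e \<notin> fev A" using True by simp
        ultimately show ?thesis using sub_evarR[OF h(1) h(3)[unfolded e] h(2)] e by blast
      qed
    next
      case False
      then obtain e where e: "A = EVar e" using A by blast
      have "B = EVar e \<or> e \<notin> fev B" using B by auto
      moreover have "decl_sub P (\<sigma> e) (msubst \<sigma> B)" using dd unfolding e by simp
      ultimately show ?thesis using sub_evarL[OF h(1) h(2)[unfolded e] h(3)] e by blast
    qed
  qed
next
  case (dsub_arr P B1 A1 A2 B2)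
  have der: "decl_sub P (Arr A1 A2) (Arr B1 B2)" using dsub_arr.hyps by (rule decl_sub.dsub_arr)
  note IH1 = dsub_arr.IH(1)[rule_format]
  note IH2 = dsub_arr.IH(2)[rule_format]
  show ?case
  proof (intro allI impI)
    fix G \<sigma> A B assume h: "invc G \<sigma> P" "appd G A" "appd G B" "Arr A1 A2 = msubst \<sigma> A" "Arr B1 B2 = msubst \<sigma> B"
    have ok: "okc {} {} \<sigma> G" using h(1) unfolding invc_def by auto
    have dd: "decl_sub P (msubst \<sigma> A) (msubst \<sigma> B)" using der unfolding h(4)[symmetric] h(5)[symmetric] .
    show "\<exists>D \<sigma>'. alg_sub G A B D \<and> goodout G \<sigma> P D \<sigma>'"
    proof (cases "\<exists>e. A = EVar e")
      case True
      then obtain e where e: "A = EVar e" by blast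
      have me: "mono (\<sigma> e)" using appd_ev_mono[OF h(1)] h(2) e by simp
      show ?thesis
      proof (cases "B = EVar e \<or> e \<notin> fev B")
        case True
        moreover have "decl_sub P (\<sigma> e) (msubst \<sigma> B)" using dd unfolding e by simp
        ultimately show ?thesis using sub_evarL[OF h(1) h(2)[unfolded e] h(3)] e by blast
      next
        case False
        then have ne: "B \<noteq> EVar e" "e \<in> fev B" by auto
        then obtain C1 C2 where C: "B = Arr C1 C2" "msubst \<sigma> C1 = B1" "msubst \<sigma> C2 = B2"
          using msubst_inv_Arr[OF h(5)[symmetric]] by auto
        have "subt (\<sigma> e) B1 \<or> subt (\<sigma> e) B2" using msubst_subt[of e C1 \<sigma>] msubst_subt[of e C2 \<sigma>] ne C by auto
        moreover have "decl_sub P (\<sigma> e) (Arr B1 B2)" using der h(4) e by simp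
        ultimately have False using occurs_L[of P "\<sigma> e" B1 B2] me by blast
        then show ?thesis ..
      qed
    next
      case False
      then obtain A1' A2' where A: "A = Arr A1' A2'" "msubst \<sigma> A1' = A1" "msubst \<sigma> A2' = A2"
        using msubst_inv_Arr[OF h(4)[symmetric]] by blast
      show ?thesis
      proof (cases "\<exists>e. B = EVar e")
        case True
        then obtain e where e: "B = EVar e" by blast
        have me: "mono (\<sigma> e)" using appd_ev_mono[OF h(1)] h(3) e by simp
        show ?thesis
        proof (cases "e \<in> fev A")
          case False
          moreover have "decl_sub P (msubst \<sigma> A) (\<sigma> e)" using dd unfolding e by simp
          ultimately show ?thesis using sub_evarR[OF h(1) h(3)[unfolded e] h(2)] e by blast
        next
          case True
          have "subt (\<sigma> e) A1 \<or> subt (\<sigma> e) A2" using msubst_subt[of e A1' \<sigma>] msubst_subt[of e A2' \<sigma>] True A by auto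
          moreover have "decl_sub P (Arr A1 A2) (\<sigma> e)" using der h(5) e by simp
          ultimately have False using occurs_R[of P A1 A2 "\<sigma> e"] me by blast
          then show ?thesis ..
        qed
      next
        case False
        then obtain C1 C2 where C: "B = Arr C1 C2" "msubst \<sigma> C1 = B1" "msubst \<sigma> C2 = B2"
          using msubst_inv_Arr[OF h(5)[symmetric]] by blast
        have ap1: "appd G C1" "appd G A1'" using h(2,3) A(1) C(1) unfolding appd_def by auto
        obtain T \<sigma>T where T: "alg_sub G C1 A1' T" "goodout G \<sigma> P T \<sigma>T"
          using IH1[OF h(1) ap1 C(2)[symmetric] A(2)[symmetric]] by blast
        have rT: "refines G T" and okT: "okc {} {} \<sigma>T T" and ivT: "invc T \<sigma>T P" and exT: "extsem G \<sigma> T \<sigma>T"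
          using T(2) unfolding goodout_def invc_def by auto
        have ap2: "appd G A2'" "appd G C2" using h(2,3) A(1) C(1) unfolding appd_def by auto
        have edT: "edom G \<subseteq> edom T" by (rule refines_edom[OF rT])
        have apT: "appd T (applyc T A2')" "appd T (applyc T C2)"
          using appd_applyc[OF okT] appd_edom[OF ap2(1)] appd_edom[OF ap2(2)] edT by blast+
        have "msubst \<sigma>T (applyc T A2') = msubst \<sigma> (applyc G A2')"
          using exT appd_edom[OF ap2(1)] unfolding extsem_def by auto
        then have s2: "msubst \<sigma>T (applyc T A2') = A2" using appd_id[OF ok ap2(1)] A(3) by simp
        have "msubst \<sigma>T (applyc T C2) = msubst \<sigma> (applyc G C2)"
          using exT appd_edom[OF ap2(2)] unfolding extsem_def by auto
        then have s3: "msubst \<sigma>T (applyc T C2) = B2" using appd_id[OF ok ap2(2)] C(3) by simp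
        obtain D \<sigma>D where Dd: "alg_sub T (applyc T A2') (applyc T C2) D" "goodout T \<sigma>T P D \<sigma>D"
          using IH2[OF ivT apT s2[symmetric] s3[symmetric]] by blast
        have rD: "refines T D" and exD: "extsem T \<sigma>T D \<sigma>D" using Dd(2) unfolding goodout_def by auto
        have "alg_sub G A B D" unfolding A(1) C(1) by (rule asub_arr[OF T(1) Dd(1)])
        moreover have "goodout G \<sigma> P D \<sigma>D" using Dd(2) refines_trans[OF rT rD] extsem_trans[OF rT exT exD]
          unfolding goodout_def by auto
        ultimately show ?thesis by blast
      qed
    qed
  qed
next
  case (dsub_allL t P A B)
  note IH = dsub_allL.IH[rule_format]
  show ?case
  proof (intro allI impI)
    fix G \<sigma> A0 B0 assume h: "invc G \<sigma> P" "appd G A0" "appd G B0" "All A = msubst \<sigma> A0" "B = msubst \<sigma> B0"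
    have ok: "okc {} {} \<sigma> G" and td: "tdom G = tdom P" using h(1) unfolding invc_def by auto
    obtain A' where A': "A0 = All A'" "msubst \<sigma> A' = A"
    proof -
      from msubst_inv_All[OF h(4)[symmetric]] show ?thesis
      proof
        assume "\<exists>e. A0 = EVar e"
        then obtain e where e: "A0 = EVar e" by blast
        then have "mono (\<sigma> e)" using appd_ev_mono[OF h(1)] h(2) by simp
        then show ?thesis using h(4) e by (metis mono.simps(5) msubst.simps(1))
      qed (use that in blast)
    qed
    obtain a where a: "a \<notin> edom G \<union> mdom G \<union> fev A' \<union> fev B0" using fresh
      by (meson finite_UnI finite_edom finite_fev finite_mdom)
    define G' where "G' = G @ [CMarker a, CEVar a]"
    define \<sigma>' where "\<sigma>' = \<sigma>(a := t)"
    have tf: "fev t = {}" using dsub_allL.hyps(2) unfolding decl_typ_def .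
    have tt: "ftv t \<subseteq> tdom G" using wft_ftv dsub_allL.hyps(3) td unfolding wft_def by blast
    have sg: "\<forall>x. CEVar x \<in> set G \<longrightarrow> \<sigma>' x = \<sigma> x" using a in_edom(1) unfolding \<sigma>'_def by fastforce
    have okG0: "okc {} {} \<sigma>' G" using okc_cong[OF ok sg] .
    have sa: "\<sigma>' a = t" unfolding \<sigma>'_def by simp
    have okG': "okc {} {} \<sigma>' G'" unfolding G'_def okc_append
      using okG0 sa a dsub_allL.hyps(1) tf tt by auto
    have ivG': "invc G' \<sigma>' P" using okG' td unfolding invc_def G'_def by simp
    have apO: "appd G' (open_k 0 (EVar a) A')" using fev_open[of 0 "EVar a" A'] h(2) A'(1)
      unfolding appd_def G'_def by auto
    have apB: "appd G' B0" using h(3) unfolding appd_def G'_def by auto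
    have nb: "\<forall>x\<in>fev A'. nob (\<sigma>' x)"
    proof
      fix x assume x: "x \<in> fev A'"
      then have "CEVar x \<in> set G" using h(2) A'(1) unfolding appd_def by auto
      then show "nob (\<sigma>' x)" using okc_ev[OF ok] sg mono_nob by metis
    qed
    have "msubst \<sigma>' (open_k 0 (EVar a) A') = open_k 0 t (msubst \<sigma>' A')"
      using msubst_open[OF nb, of 0 "EVar a"] sa by simp
    also have "msubst \<sigma>' A' = msubst \<sigma> A'" using a unfolding \<sigma>'_def by (auto intro!: msubst_cong)
    finally have sO: "open_typ A t = msubst \<sigma>' (open_k 0 (EVar a) A')" using A'(2) unfolding open_typ_def by simp
    have sB: "B = msubst \<sigma>' B0" using h(5) a unfolding \<sigma>'_def by (auto intro!: msubst_cong)
    obtain D0 \<sigma>'' where D0: "alg_sub G' (open_k 0 (EVar a) A') B0 D0" "goodout G' \<sigma>' P D0 \<sigma>''"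
      using IH[OF ivG' apO apB sO sB] by blast
    have r0: "refines G' D0" and ok0: "okc {} {} \<sigma>'' D0" and ex0: "extsem G' \<sigma>' D0 \<sigma>''"
      using D0(2) unfolding goodout_def invc_def by auto
    obtain D T where D: "D0 = D @ [CMarker a] @ T" "refines G D" "okc {} {} \<sigma>'' D" "extsem G \<sigma> D \<sigma>''"
      using trunc_marker[OF r0[unfolded G'_def] ok0 ex0[unfolded G'_def] ok] a unfolding \<sigma>'_def by auto
    have "alg_sub G (All A') B0 D"
      by (rule asub_allL[of a G A' B0 D T]) (use a D0(1) D(1) in \<open>auto simp: G'_def open_typ_def\<close>)
    moreover have "goodout G \<sigma> P D \<sigma>''" unfolding goodout_def invc_def
      using D refines_tdom[OF D(2)] td by auto
    ultimately show "\<exists>D \<sigma>'. alg_sub G A0 B0 D \<and> goodout G \<sigma> P D \<sigma>'" using A'(1) by blast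
  qed
next
  case (dsub_allR b P A B)
  note IH = dsub_allR.IH[rule_format]
  show ?case
  proof (intro allI impI)
    fix G \<sigma> A0 B0 assume h: "invc G \<sigma> P" "appd G A0" "appd G B0" "A = msubst \<sigma> A0" "All B = msubst \<sigma> B0"
    have ok: "okc {} {} \<sigma> G" and td: "tdom G = tdom P" using h(1) unfolding invc_def by auto
    obtain B' where B': "B0 = All B'" "msubst \<sigma> B' = B"
    proof -
      from msubst_inv_All[OF h(5)[symmetric]] show ?thesis
      proof
        assume "\<exists>e. B0 = EVar e"
        then obtain e where e: "B0 = EVar e" by blast
        then have "mono (\<sigma> e)" using appd_ev_mono[OF h(1)] h(3) by simp
        then show ?thesis using h(5) e by (metis mono.simps(5) msubst.simps(1))
      qed (use that in blast)
    qed
    define G' where "G' = G @ [CTVar b]"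
    have okG': "okc {} {} \<sigma> G'" unfolding G'_def okc_append using ok by simp
    have ivG': "invc G' \<sigma> (P @ [CTVar b])" using okG' td unfolding invc_def G'_def by simp
    have apA: "appd G' A0" using h(2) unfolding appd_def G'_def by auto
    have apO: "appd G' (open_k 0 (TVar b) B')" using fev_open[of 0 "TVar b" B'] h(3) B'(1)
      unfolding appd_def G'_def by auto
    have nb: "\<forall>x\<in>fev B'. nob (\<sigma> x)"
    proof
      fix x assume x: "x \<in> fev B'"
      then have "CEVar x \<in> set G" using h(3) B'(1) unfolding appd_def by auto
      then show "nob (\<sigma> x)" using okc_ev[OF ok] mono_nob by metis
    qed
    have sO: "open_typ B (TVar b) = msubst \<sigma> (open_k 0 (TVar b) B')"
      using msubst_open[OF nb] B'(2) unfolding open_typ_def by simp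
    obtain D0 \<sigma>'' where D0: "alg_sub G' A0 (open_k 0 (TVar b) B') D0" "goodout G' \<sigma> (P @ [CTVar b]) D0 \<sigma>''"
      using IH[OF ivG' apA apO h(4) sO] by blast
    have r0: "refines G' D0" and ok0: "okc {} {} \<sigma>'' D0" and ex0: "extsem G' \<sigma> D0 \<sigma>''"
      using D0(2) unfolding goodout_def invc_def by auto
    obtain D where D: "D0 = D @ [CTVar b]" "refines G D" "okc {} {} \<sigma>'' D" "extsem G \<sigma> D \<sigma>''"
      using trunc_tvar[OF r0[unfolded G'_def] ok0 ex0[unfolded G'_def]] by blast
    have bG: "b \<notin> tdom G" using dsub_allR.hyps(1) td by simp
    have bB: "b \<notin> ftv B'" using dsub_allR.hyps(3) ftv_msubst[of B' \<sigma>] B'(2) by auto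
    have bA: "b \<notin> ftv A0" using dsub_allR.hyps(2) ftv_msubst[of A0 \<sigma>] h(4) by auto
    have "alg_sub G A0 (All B') D"
      by (rule asub_allR[of b G A0 B' D "[]"]) (use bG bB bA D0(1) D(1) in \<open>auto simp: G'_def open_typ_def\<close>)
    moreover have "goodout G \<sigma> P D \<sigma>''" unfolding goodout_def invc_def
      using D refines_tdom[OF D(2)] td by auto
    ultimately show "\<exists>D \<sigma>'. alg_sub G A0 B0 D \<and> goodout G \<sigma> P D \<sigma>'" using B'(1) by blast
  qed
qed

theorem mainTheorem8:
  assumes "wf_ctx P" and "decl_ctx P"
    and "decl_typ A" and "decl_typ B"
    and "decl_sub P A B"
  shows "\<exists>D. alg_sub P A B D"
proof -
  have "\<forall>x\<in>set P. \<not> isev x"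
  proof
    fix x assume "x \<in> set P"
    then have "decl_entry x" using assms(2) unfolding decl_ctx_def by blast
    then show "\<not> isev x" by (cases x rule: entry.exhaust) auto
  qed
  then have iv: "invc P EVar P" unfolding invc_def using okc_noev by blast
  have fa: "fev A = {}" "fev B = {}" using assms(3,4) unfolding decl_typ_def by auto
  have ap: "appd P A" "appd P B" using fa unfolding appd_def by auto
  have "A = msubst EVar A" "B = msubst EVar B" by (simp_all add: msubst_EVar)
  then show ?thesis using sub_complete[OF assms(5), rule_format, OF iv ap] by blast
qed

end
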